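(* Let $E/\mathbb{Q}$ be the elliptic curve $y^2=x^3+a_4x+a_6$ with $a_4,a_6\in\mathbb{Z}$, let $\mathcal{P}$ be a set of linearly independent points in $E(\mathbb{Q})$, and fix $0<\varepsilon<\frac12$. For $n\in\mathbb{Z}^+$ and $Y>0$, let $A_n(Y)$ be the number of pairs of integers $0<x,y<Y$ such that $(x+ny,y)$ is not simultaneously map-suitable for $E$, kernel-suitable for $E$, and $\varepsilon$-bound-suitable for $\mathcal{P}$. Then there exists $N>0$ such that for all $n>N$, $A_n(Y)=O_\varepsilon(Y^{2-\varepsilon})$ as $Y\to\infty$.
   Context: $d_E(u,v):=v(u^3+a_4uv^2-a_6v^3)$, $D_E(u,v):=4d_E(u,v)$. Map-suitable: $u$, $v$, $3u^2+a_4v^2$, $D_E(u,v)$ all positive. Kernel-suitable: $v>1$ and $\frac{d_E(u,v)-uv}{v^2}>A_0$, where $A_0:=\max\{A:(A,B)\in E_{\mathrm{tor}}(\mathbb{Q})\}$. Heights: $h_W(m/n)=\log\max(|m|,|n|)$ in lowest terms; $h_W(P)$ is $h_W$ of the $x$-coordinate; $\hat h(P)=\frac12\lim_k h_W(kP)/k^2$; $d(\mathcal{P}):=\max_{\delta_i\in\{0,\pm1\}}2\hat h(\sum\delta_iP_i)$; $\delta(E):=\frac18h_W(j(E))+\frac1{12}h_W(\Delta(E))+\frac53$. With $\varepsilon'=\frac{\varepsilon}{1-\varepsilon}$, $(u,v)$ is $\varepsilon$-bound-suitable for $\mathcal{P}$ if $u,v>0$ and $\big(\frac14(uv+v^2)\big)^{1+\varepsilon'}e^{2(1+\varepsilon')(\delta(E)+d(\mathcal{P}))}<d_E(u,v)<(v^2(uv+v^2))^{1+\varepsilon'}$.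 *)

theory Defs
  imports Complex_Main "HOL-Library.Landau_Symbols"
begin

datatype ecpt = Inf | Pt rat rat

definition elliptic :: "int \<Rightarrow> int \<Rightarrow> bool" where
  "elliptic a4 a6 \<longleftrightarrow> 4 * a4 ^ 3 + 27 * a6 ^ 2 \<noteq> 0"

definition on_curve :: "int \<Rightarrow> int \<Rightarrow> ecpt \<Rightarrow> bool" where
  "on_curve a4 a6 P = (case P of Inf \<Rightarrow> True
     | Pt x y \<Rightarrow> y ^ 2 = x ^ 3 + of_int a4 * x + of_int a6)"

fun ec_add :: "int \<Rightarrow> int \<Rightarrow> ecpt \<Rightarrow> ecpt \<Rightarrow> ecpt" where
  "ec_add a4 a6 Inf Q = Q"
| "ec_add a4 a6 (Pt x1 y1) Inf = Pt x1 y1"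
| "ec_add a4 a6 (Pt x1 y1) (Pt x2 y2) =
     (if x1 = x2 \<and> y1 = - y2 then Inf
      else let l = (if x1 = x2 then (3 * x1 ^ 2 + of_int a4) / (2 * y1)
                    else (y2 - y1) / (x2 - x1));
               x3 = l ^ 2 - x1 - x2
           in Pt x3 (l * (x1 - x3) - y1))"

fun ec_neg :: "ecpt \<Rightarrow> ecpt" where
  "ec_neg Inf = Inf"
| "ec_neg (Pt x y) = Pt x (- y)"

fun ec_nmul :: "int \<Rightarrow> int \<Rightarrow> nat \<Rightarrow> ecpt \<Rightarrow> ecpt" where
  "ec_nmul a4 a6 0 P = Inf"
| "ec_nmul a4 a6 (Suc k) P = ec_add a4 a6 P (ec_nmul a4 a6 k P)"

definition ec_zmul :: "int \<Rightarrow> int \<Rightarrow> int \<Rightarrow> ecpt \<Rightarrow> ecpt" where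
  "ec_zmul a4 a6 k P = (if k \<ge> 0 then ec_nmul a4 a6 (nat k) P
                         else ec_neg (ec_nmul a4 a6 (nat (- k)) P))"

definition ec_sum :: "int \<Rightarrow> int \<Rightarrow> ecpt list \<Rightarrow> ecpt" where
  "ec_sum a4 a6 Ps = foldr (ec_add a4 a6) Ps Inf"

definition torsion :: "int \<Rightarrow> int \<Rightarrow> ecpt \<Rightarrow> bool" where
  "torsion a4 a6 P \<longleftrightarrow> on_curve a4 a6 P \<and> (\<exists>k>0. ec_nmul a4 a6 k P = Inf)"

definition lin_indep :: "int \<Rightarrow> int \<Rightarrow> ecpt list \<Rightarrow> bool" where
  "lin_indep a4 a6 Ps \<longleftrightarrow> (\<forall>P\<in>set Ps. on_curve a4 a6 P) \<and>
     (\<forall>cs :: int list. length cs = length Ps \<longrightarrow>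
        ec_sum a4 a6 (map2 (ec_zmul a4 a6) cs Ps) = Inf \<longrightarrow> (\<forall>c\<in>set cs. c = 0))"

definition hW :: "rat \<Rightarrow> real" where
  "hW r = (case quotient_of r of (m, n) \<Rightarrow> ln (real_of_int (max \<bar>m\<bar> \<bar>n\<bar>)))"

definition hW_pt :: "ecpt \<Rightarrow> real" where
  "hW_pt P = (case P of Inf \<Rightarrow> 0 | Pt x y \<Rightarrow> hW x)"

definition canon_height :: "int \<Rightarrow> int \<Rightarrow> ecpt \<Rightarrow> real" where
  "canon_height a4 a6 P = 1/2 * lim (\<lambda>k::nat. hW_pt (ec_nmul a4 a6 k P) / (real k) ^ 2)"

definition dP :: "int \<Rightarrow> int \<Rightarrow> ecpt list \<Rightarrow> real" where
  "dP a4 a6 Ps = Max {2 * canon_height a4 a6 (ec_sum a4 a6 (map2 (ec_zmul a4 a6) ds Ps)) | ds.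
                      length ds = length Ps \<and> set ds \<subseteq> {-1, 0, 1}}"

definition disc :: "int \<Rightarrow> int \<Rightarrow> int" where
  "disc a4 a6 = -16 * (4 * a4 ^ 3 + 27 * a6 ^ 2)"

definition jinv :: "int \<Rightarrow> int \<Rightarrow> rat" where
  "jinv a4 a6 = - 1728 * of_int ((4 * a4) ^ 3) / of_int (disc a4 a6)"

definition deltaE :: "int \<Rightarrow> int \<Rightarrow> real" where
  "deltaE a4 a6 = 1/8 * hW (jinv a4 a6) + 1/12 * hW (of_int (disc a4 a6)) + 5/3"

definition dE :: "int \<Rightarrow> int \<Rightarrow> int \<Rightarrow> int \<Rightarrow> int" where
  "dE a4 a6 u v = v * (u ^ 3 + a4 * u * v ^ 2 - a6 * v ^ 3)"

definition DE :: "int \<Rightarrow> int \<Rightarrow> int \<Rightarrow> int \<Rightarrow> int" where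
  "DE a4 a6 u v = 4 * dE a4 a6 u v"

definition map_suitable :: "int \<Rightarrow> int \<Rightarrow> int \<Rightarrow> int \<Rightarrow> bool" where
  "map_suitable a4 a6 u v \<longleftrightarrow> u > 0 \<and> v > 0 \<and> 3 * u ^ 2 + a4 * v ^ 2 > 0 \<and> DE a4 a6 u v > 0"

text \<open>A_0 is the maximal x-coordinate of an affine torsion point; the condition
  "(dE - uv)/v^2 > A_0" is expressed as "exceeds the x-coordinate of every affine
  torsion point".\<close>
definition kernel_suitable :: "int \<Rightarrow> int \<Rightarrow> int \<Rightarrow> int \<Rightarrow> bool" where
  "kernel_suitable a4 a6 u v \<longleftrightarrow> v > 1 \<and>
     (\<forall>A B. torsion a4 a6 (Pt A B) \<longrightarrow>
        real_of_int (dE a4 a6 u v - u * v) / real_of_int (v ^ 2) > real_of_rat A)"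

definition bound_suitable :: "int \<Rightarrow> int \<Rightarrow> ecpt list \<Rightarrow> real \<Rightarrow> int \<Rightarrow> int \<Rightarrow> bool" where
  "bound_suitable a4 a6 Ps \<epsilon> u v \<longleftrightarrow> u > 0 \<and> v > 0 \<and>
     (let e' = \<epsilon> / (1 - \<epsilon>); uu = real_of_int u; vv = real_of_int v;
          d = real_of_int (dE a4 a6 u v)
      in (1/4 * (uu * vv + vv ^ 2)) powr (1 + e') * exp (2 * (1 + e') * (deltaE a4 a6 + dP a4 a6 Ps)) < d
         \<and> d < (vv ^ 2 * (uu * vv + vv ^ 2)) powr (1 + e'))"

definition A_count :: "int \<Rightarrow> int \<Rightarrow> ecpt list \<Rightarrow> real \<Rightarrow> nat \<Rightarrow> real \<Rightarrow> nat" where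
  "A_count a4 a6 Ps \<epsilon> n Y = card {(x :: int, y :: int). 0 < x \<and> real_of_int x < Y \<and> 0 < y \<and> real_of_int y < Y \<and>
      \<not> (map_suitable a4 a6 (x + int n * y) y \<and> kernel_suitable a4 a6 (x + int n * y) y \<and>
         bound_suitable a4 a6 Ps \<epsilon> (x + int n * y) y)}"

end

theory Submission
  imports Defs "HOL-Computational_Algebra.Primes"
begin

definition bin3 :: "int \<Rightarrow> int \<Rightarrow> int \<Rightarrow> int \<Rightarrow> int \<Rightarrow> int \<Rightarrow> int" where
  "bin3 c1 c2 c3 c4 m e = c1*m^3 + c2*m^2*e + c3*m*e^2 + c4*e^3"

definition tern2 :: "int \<Rightarrow> int \<Rightarrow> int \<Rightarrow> int \<Rightarrow> int \<Rightarrow> int \<Rightarrow> int \<Rightarrow> int \<Rightarrow> int \<Rightarrow> int" where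
  "tern2 c1 c2 c3 c4 c5 c6 t0 t1 t2 = c1*t0^2 + c2*t1^2 + c3*t2^2 + c4*t0*t1 + c5*t0*t2 + c6*t1*t2"

definition Phi :: "int \<Rightarrow> int \<Rightarrow> int \<Rightarrow> int \<Rightarrow> int" where
  "Phi a b m e = m^4 - 2*a*m^2*e^2 - 8*b*m*e^3 + a^2*e^4"
definition Psi :: "int \<Rightarrow> int \<Rightarrow> int \<Rightarrow> int \<Rightarrow> int" where
  "Psi a b m e = 4*e*(m^3 + a*m*e^2 + b*e^3)"

definition WW0 :: "int \<Rightarrow> int \<Rightarrow> int \<Rightarrow> int \<Rightarrow> int \<Rightarrow> int" where
  "WW0 a b t0 t1 t2 = t1^2 - 4*t0*t2"
definition WW1 :: "int \<Rightarrow> int \<Rightarrow> int \<Rightarrow> int \<Rightarrow> int \<Rightarrow> int" where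
  "WW1 a b t0 t1 t2 = 2*(t2 + a*t0)*t1 + 4*b*t0^2"
definition WW2 :: "int \<Rightarrow> int \<Rightarrow> int \<Rightarrow> int \<Rightarrow> int \<Rightarrow> int" where
  "WW2 a b t0 t1 t2 = (t2 - a*t0)^2 - 4*b*t0*t1"

lemma certD1: "bin3 0 12 0 (16*a) m e * Phi a b m e + bin3 (-3) 0 (5*a) (27*b) m e * Psi a b m e
   = 4*(4*a^3+27*b^2) * e^7"
  unfolding bin3_def Phi_def Psi_def by algebra

lemma certD2: "bin3 (108*b^2 + 16*a^3) (-4*a^2*b) (88*a*b^2 + 12*a^4) (96*b^3 + 12*a^3*b) m e * Phi a b m e
  + bin3 (a^2*b) (32*a*b^2 + 5*a^4) (192*b^3 + 26*a^3*b) (-24*a^2*b^2 - 3*a^5) m e * Psi a b m e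
   = 4*(4*a^3+27*b^2) * m^7"
  unfolding bin3_def Phi_def Psi_def by algebra

lemma certS0: "tern2 (-16*a^2) 0 0 (24*b) (8*a) 0 t0 t1 t2 * WW0 a b t0 t1 t2
  + tern2 (54*b) 0 0 (5*a) 0 (-3) t0 t1 t2 * WW1 a b t0 t1 t2
  + tern2 (32*a) 6 0 0 0 0 t0 t1 t2 * WW2 a b t0 t1 t2 = 8*(4*a^3+27*b^2) * t0^4"
  unfolding tern2_def WW0_def WW1_def WW2_def by algebra

lemma certS1: "tern2 0 (216*b^2 + 32*a^3) 0 0 (96*b^2) (128*a*b) t0 t1 t2 * WW0 a b t0 t1 t2
  + tern2 0 (-64*a*b) (96*b) (16*a^3) 0 (16*a^2) t0 t1 t2 * WW1 a b t0 t1 t2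
  + tern2 0 (-32*a^2) 0 (-64*a*b) 0 (-192*b) t0 t1 t2 * WW2 a b t0 t1 t2 = 8*(4*a^3+27*b^2) * t1^4"
  unfolding tern2_def WW0_def WW1_def WW2_def by algebra

lemma certS2: "tern2 0 0 (-108*a*b^2 - 16*a^4) (-16*a*b^3 - 2*a^4*b) (56*a^2*b^2 + 8*a^5) (-192*b^3 - 26*a^3*b) t0 t1 t2 * WW0 a b t0 t1 t2
  + tern2 0 (96*b^3 + 13*a^3*b) (2*a^2*b) (-24*a^2*b^2 - 3*a^5) 0 (32*a*b^2 + 5*a^4) t0 t1 t2 * WW1 a b t0 t1 t2
  + tern2 0 (44*a*b^2 + 6*a^4) (216*b^2 + 32*a^3) (96*b^3 + 12*a^3*b) 0 (-4*a^2*b) t0 t1 t2 * WW2 a b t0 t1 t2 = 8*(4*a^3+27*b^2) * t2^4"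
  unfolding tern2_def WW0_def WW1_def WW2_def by algebra

definition Hq :: "rat \<Rightarrow> int" where
  "Hq r = (case quotient_of r of (m, e) \<Rightarrow> max \<bar>m\<bar> \<bar>e\<bar>)"

lemma Hq_ge1: "Hq r \<ge> 1"
proof -
  obtain m e where q: "quotient_of r = (m, e)" by (cases "quotient_of r")
  have "e > 0" using quotient_of_denom_pos[OF q] .
  then show ?thesis unfolding Hq_def q by simp
qed

lemma Hq_abs: "\<bar>real_of_rat r\<bar> \<le> real_of_int (Hq r)"
proof -
  obtain m e where q: "quotient_of r = (m, e)" by (cases "quotient_of r")
  have e: "e > 0" using quotient_of_denom_pos[OF q] .
  have r: "r = of_int m / of_int e" using quotient_of_div[OF q] .
  have "real_of_rat r = real_of_int m / real_of_int e" unfolding r by (simp add: of_rat_divide)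
  then have "\<bar>real_of_rat r\<bar> = \<bar>real_of_int m\<bar> / real_of_int e" using e by simp
  also have "\<dots> \<le> \<bar>real_of_int m\<bar>"
  proof -
    have "real_of_int e \<ge> 1" using e by simp
    then have "\<bar>real_of_int m\<bar> * 1 \<le> \<bar>real_of_int m\<bar> * real_of_int e" by (intro mult_left_mono) auto
    then show ?thesis using e by (simp add: divide_le_eq)
  qed
  also have "\<dots> \<le> real_of_int (Hq r)" unfolding Hq_def q by simp
  finally show ?thesis .
qed

lemma H_frac:
  assumes "B \<noteq> 0" "r = of_int A / of_int B"
  shows "\<exists>k. k \<noteq> 0 \<and> k dvd A \<and> k dvd B \<and> max \<bar>A\<bar> \<bar>B\<bar> = \<bar>k\<bar> * Hq r"
proof -
  obtain p q where qr: "quotient_of r = (p, q)" by (cases "quotient_of r")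
  have q0: "q > 0" using quotient_of_denom_pos[OF qr] .
  have cop: "coprime p q" using quotient_of_coprime[OF qr] .
  have "of_int A / of_int B = (of_int p / of_int q :: rat)" using quotient_of_div[OF qr] assms(2) by simp
  then have "of_int (A * q) = (of_int (p * B) :: rat)" using assms(1) q0 by (simp add: field_simps)
  then have eq: "A * q = p * B" by (simp only: of_int_eq_iff)
  have "q dvd p * B" using eq by (metis dvd_triv_right)
  then have "q dvd B" using cop by (metis coprime_commute coprime_dvd_mult_right_iff)
  then obtain k where Bk: "B = q * k" by blast
  have "A * q = p * k * q" using eq Bk by simp
  then have Ak: "A = p * k" using q0 by simp
  have k0: "k \<noteq> 0" using Bk assms(1) by auto
  have "max \<bar>A\<bar> \<bar>B\<bar> = \<bar>k\<bar> * max \<bar>p\<bar> \<bar>q\<bar>" unfolding Ak Bk abs_mult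
    by (simp add: max_mult_distrib_left mult.commute)
  then show ?thesis using k0 Ak Bk unfolding Hq_def qr by auto
qed

lemma dvd_gcd_R: fixes d R a b :: int
  assumes "d dvd R * a" "d dvd R * b" shows "d dvd R * gcd a b"
proof -
  have "d dvd gcd (R*a) (R*b)" using assms by simp
  then have "d dvd \<bar>R\<bar> * gcd a b" by (simp add: gcd_mult_distrib_int)
  then have "d dvd \<bar>R * gcd a b\<bar>" by (simp add: abs_mult)
  then show ?thesis by simp
qed

lemma dvd2: fixes d R u v :: int
  assumes "coprime u v" "d dvd R * u^N" "d dvd R * v^N" shows "d dvd R"
proof -
  have "coprime (u^N) (v^N)" using assms(1) by simp
  then have "gcd (u^N) (v^N) = 1" by (simp only: coprime_iff_gcd_eq_1)
  then show ?thesis using dvd_gcd_R[OF assms(2,3)] by simp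
qed

lemma dvd3: fixes d R u0 u1 u2 :: int
  assumes "gcd u0 (gcd u1 u2) = 1" "d dvd R * u0^N" "d dvd R * u1^N" "d dvd R * u2^N" shows "d dvd R"
proof -
  have "d dvd R * gcd (u1^N) (u2^N)" using dvd_gcd_R[OF assms(3,4)] .
  then have "d dvd R * (gcd u1 u2)^N" by (simp add: gcd_exp)
  moreover have "coprime u0 (gcd u1 u2)" using assms(1) by (simp add: coprime_iff_gcd_eq_1)
  ultimately show ?thesis using dvd2[OF _ assms(2)] by blast
qed

lemma prim3: fixes m1 e1 m2 e2 :: int
  assumes c1: "coprime m1 e1" and c2: "coprime m2 e2"
  shows "gcd (e1*e2) (gcd (m1*e2+m2*e1) (m1*m2)) = 1"
proof (rule ccontr)
  let ?g = "gcd (e1*e2) (gcd (m1*e2+m2*e1) (m1*m2))"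
  assume "?g \<noteq> 1"
  moreover have "?g \<ge> 0" by simp
  ultimately have "\<bar>?g\<bar> \<noteq> 1" by simp
  then obtain p where p: "prime p" "p dvd ?g" by (rule prime_factor_int)
  then have h0: "p dvd e1*e2" and h1: "p dvd m1*e2+m2*e1" and h2: "p dvd m1*m2" by auto
  have np1: "\<not> (p dvd m1 \<and> p dvd e1)" using c1 p(1)
    by (meson coprime_common_divisor not_prime_unit)
  have np2: "\<not> (p dvd m2 \<and> p dvd e2)" using c2 p(1)
    by (meson coprime_common_divisor not_prime_unit)
  show False
  proof (cases "p dvd e1")
    case True
    then have "\<not> p dvd m1" using np1 by blast
    then have "p dvd m2" using h2 p(1) by (simp add: prime_dvd_mult_iff)
    then have "\<not> p dvd e2" using np2 by blast
    have "p dvd m2*e1" using True by simp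
    then have "p dvd m1*e2" using h1 by (metis dvd_add_left_iff add.commute)
    then show False using \<open>\<not> p dvd m1\<close> \<open>\<not> p dvd e2\<close> p(1) by (simp add: prime_dvd_mult_iff)
  next
    case False
    then have "p dvd e2" using h0 p(1) by (simp add: prime_dvd_mult_iff)
    then have "\<not> p dvd m2" using np2 by blast
    then have "p dvd m1" using h2 p(1) by (simp add: prime_dvd_mult_iff)
    have "p dvd m1*e2" using \<open>p dvd e2\<close> by simp
    then have "p dvd m2*e1" using h1 by (metis dvd_add_right_iff)
    then show False using \<open>\<not> p dvd m2\<close> False p(1) by (simp add: prime_dvd_mult_iff)
  qed
qed

lemma mono_bd3: fixes m e M :: int
  assumes "\<bar>m\<bar> \<le> M" "\<bar>e\<bar> \<le> M" "i + j = 3"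
  shows "\<bar>c * (m^i * e^j)\<bar> \<le> \<bar>c\<bar> * M^3"
proof -
  have "\<bar>m\<bar>^i * \<bar>e\<bar>^j \<le> M^i * M^j"
    by (intro mult_mono power_mono) (use assms in auto)
  also have "\<dots> = M^3" using assms(3) by (simp add: power_add[symmetric])
  finally have "\<bar>m^i * e^j\<bar> \<le> M^3" by (simp add: abs_mult power_abs)
  then show ?thesis by (simp add: abs_mult mult_left_mono)
qed

lemma abs_add4: fixes a b c d :: int shows "\<bar>a+b+c+d\<bar> \<le> \<bar>a\<bar>+\<bar>b\<bar>+\<bar>c\<bar>+\<bar>d\<bar>"
proof -
  have "\<bar>a+b+c+d\<bar> \<le> \<bar>a+b+c\<bar> + \<bar>d\<bar>" by (rule abs_triangle_ineq)
  also have "\<dots> \<le> \<bar>a+b\<bar> + \<bar>c\<bar> + \<bar>d\<bar>" using abs_triangle_ineq[of "a+b" c] by (rule add_right_mono)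
  also have "\<dots> \<le> \<bar>a\<bar>+\<bar>b\<bar>+\<bar>c\<bar>+\<bar>d\<bar>" using abs_triangle_ineq[of a b] by (intro add_right_mono)
  finally show ?thesis .
qed

lemma abs_add6: fixes a b c d f g :: int shows "\<bar>a+b+c+d+f+g\<bar> \<le> \<bar>a\<bar>+\<bar>b\<bar>+\<bar>c\<bar>+\<bar>d\<bar>+\<bar>f\<bar>+\<bar>g\<bar>"
proof -
  have "\<bar>a+b+c+d+f+g\<bar> \<le> \<bar>a+b+c+d+f\<bar> + \<bar>g\<bar>" by (rule abs_triangle_ineq)
  also have "\<dots> \<le> \<bar>a+b+c+d\<bar> + \<bar>f\<bar> + \<bar>g\<bar>" using abs_triangle_ineq[of "a+b+c+d" f] by (rule add_right_mono)
  also have "\<dots> \<le> \<bar>a\<bar>+\<bar>b\<bar>+\<bar>c\<bar>+\<bar>d\<bar>+\<bar>f\<bar>+\<bar>g\<bar>" using abs_add4[of a b c d] by (intro add_right_mono)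
  finally show ?thesis .
qed

lemma bin3_bd: fixes m e M :: int
  assumes "\<bar>m\<bar> \<le> M" "\<bar>e\<bar> \<le> M"
  shows "\<bar>bin3 c1 c2 c3 c4 m e\<bar> \<le> (\<bar>c1\<bar>+\<bar>c2\<bar>+\<bar>c3\<bar>+\<bar>c4\<bar>) * M^3"
proof -
  have eq: "bin3 c1 c2 c3 c4 m e = c1*(m^3*e^0) + c2*(m^2*e^1) + c3*(m^1*e^2) + c4*(m^0*e^3)"
    unfolding bin3_def by (simp add: algebra_simps)
  have h1: "\<bar>c1*(m^3*e^0)\<bar> \<le> \<bar>c1\<bar> * M^3" by (rule mono_bd3) (use assms in auto)
  have h2: "\<bar>c2*(m^2*e^1)\<bar> \<le> \<bar>c2\<bar> * M^3" by (rule mono_bd3) (use assms in auto)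
  have h3: "\<bar>c3*(m^1*e^2)\<bar> \<le> \<bar>c3\<bar> * M^3" by (rule mono_bd3) (use assms in auto)
  have h4: "\<bar>c4*(m^0*e^3)\<bar> \<le> \<bar>c4\<bar> * M^3" by (rule mono_bd3) (use assms in auto)
  have "\<bar>bin3 c1 c2 c3 c4 m e\<bar> \<le> \<bar>c1\<bar> * M^3 + \<bar>c2\<bar> * M^3 + \<bar>c3\<bar> * M^3 + \<bar>c4\<bar> * M^3"
    unfolding eq by (rule order_trans[OF abs_add4]) (intro add_mono h1 h2 h3 h4)
  then show ?thesis by (simp add: algebra_simps)
qed

lemma mono_bd2: fixes x y M :: int
  assumes "\<bar>x\<bar> \<le> M" "\<bar>y\<bar> \<le> M"
  shows "\<bar>c * (x * y)\<bar> \<le> \<bar>c\<bar> * M^2"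
proof -
  have "\<bar>x\<bar> * \<bar>y\<bar> \<le> M * M" by (intro mult_mono) (use assms in auto)
  then have "\<bar>x * y\<bar> \<le> M^2" by (simp add: abs_mult power2_eq_square)
  then show ?thesis by (simp add: abs_mult mult_left_mono)
qed

lemma tern2_bd: fixes t0 t1 t2 M :: int
  assumes "\<bar>t0\<bar> \<le> M" "\<bar>t1\<bar> \<le> M" "\<bar>t2\<bar> \<le> M"
  shows "\<bar>tern2 c1 c2 c3 c4 c5 c6 t0 t1 t2\<bar> \<le> (\<bar>c1\<bar>+\<bar>c2\<bar>+\<bar>c3\<bar>+\<bar>c4\<bar>+\<bar>c5\<bar>+\<bar>c6\<bar>) * M^2"
proof -
  have eq: "tern2 c1 c2 c3 c4 c5 c6 t0 t1 t2 = c1*(t0*t0) + c2*(t1*t1) + c3*(t2*t2) + c4*(t0*t1) + c5*(t0*t2) + c6*(t1*t2)"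
    unfolding tern2_def by (simp add: algebra_simps power2_eq_square)
  have h1: "\<bar>c1*(t0*t0)\<bar> \<le> \<bar>c1\<bar> * M^2" by (rule mono_bd2) (use assms in auto)
  have h2: "\<bar>c2*(t1*t1)\<bar> \<le> \<bar>c2\<bar> * M^2" by (rule mono_bd2) (use assms in auto)
  have h3: "\<bar>c3*(t2*t2)\<bar> \<le> \<bar>c3\<bar> * M^2" by (rule mono_bd2) (use assms in auto)
  have h4: "\<bar>c4*(t0*t1)\<bar> \<le> \<bar>c4\<bar> * M^2" by (rule mono_bd2) (use assms in auto)
  have h5: "\<bar>c5*(t0*t2)\<bar> \<le> \<bar>c5\<bar> * M^2" by (rule mono_bd2) (use assms in auto)
  have h6: "\<bar>c6*(t1*t2)\<bar> \<le> \<bar>c6\<bar> * M^2" by (rule mono_bd2) (use assms in auto)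
  have "\<bar>tern2 c1 c2 c3 c4 c5 c6 t0 t1 t2\<bar> \<le> \<bar>c1\<bar> * M^2 + \<bar>c2\<bar> * M^2 + \<bar>c3\<bar> * M^2 + \<bar>c4\<bar> * M^2 + \<bar>c5\<bar> * M^2 + \<bar>c6\<bar> * M^2"
    unfolding eq by (rule order_trans[OF abs_add6]) (intro add_mono h1 h2 h3 h4 h5 h6)
  then show ?thesis by (simp add: algebra_simps)
qed

fun xc :: "ecpt \<Rightarrow> rat" where
  "xc Inf = 0" | "xc (Pt x y) = x"

lemma ec_add_dbl:
  assumes "y \<noteq> 0"
  shows "ec_add a b (Pt x y) (Pt x y) =
     (let l = (3 * x ^ 2 + of_int a) / (2 * y); x3 = l ^ 2 - x - x in Pt x3 (l * (x - x3) - y))"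
  using assms by simp

lemma ec_add_gen:
  assumes "x1 \<noteq> x2"
  shows "ec_add a b (Pt x1 y1) (Pt x2 y2) =
     (let l = (y2 - y1) / (x2 - x1); x3 = l ^ 2 - x1 - x2 in Pt x3 (l * (x1 - x3) - y1))"
  using assms by simp

lemma dup_x:
  fixes x y :: rat and a b :: int
  assumes y0: "y \<noteq> 0" and c: "y^2 = x^3 + of_int a * x + of_int b"
    and q: "quotient_of x = (m, e)"
  shows "xc (ec_add a b (Pt x y) (Pt x y)) = of_int (Phi a b m e) / of_int (Psi a b m e)"
    and "Psi a b m e \<noteq> 0"
proof -
  have e0: "e > 0" using quotient_of_denom_pos[OF q] .
  have xe: "x = of_int m / of_int e" using quotient_of_div[OF q] .
  have xe': "of_int m = x * of_int e" using xe e0 by (simp add: field_simps)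
  have ps: "(of_int (Psi a b m e) :: rat) = 4 * of_int e ^ 4 * y^2"
    unfolding Psi_def c by (simp add: xe' algebra_simps power2_eq_square power3_eq_cube power4_eq_xxxx)
  have ph: "(of_int (Phi a b m e) :: rat) = of_int e ^ 4 * (x^4 - 2 * of_int a * x^2 - 8 * of_int b * x + (of_int a)^2)"
    unfolding Phi_def by (simp add: xe' algebra_simps power2_eq_square power3_eq_cube power4_eq_xxxx)
  show "Psi a b m e \<noteq> 0"
  proof
    assume "Psi a b m e = 0"
    then have "(of_int (Psi a b m e) :: rat) = 0" by simp
    then show False using ps y0 e0 by simp
  qed
  define l where "l = (3 * x ^ 2 + of_int a) / (2 * y)"
  have l2: "l * (2*y) = 3 * x ^ 2 + of_int a" unfolding l_def using y0 by simp
  have "xc (ec_add a b (Pt x y) (Pt x y)) = l^2 - 2*x" using y0 unfolding l_def by (simp add: Let_def)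
  also have "\<dots> = of_int (Phi a b m e) / of_int (Psi a b m e)"
  proof -
    have "(l^2 - 2*x) * (4 * y^2) = (l * (2*y))^2 - 8*x*y^2" by (simp add: algebra_simps power2_eq_square)
    also have "\<dots> = x^4 - 2 * of_int a * x^2 - 8 * of_int b * x + (of_int a)^2"
      unfolding l2 c by (simp add: algebra_simps power2_eq_square power3_eq_cube power4_eq_xxxx)
    finally have "(l^2 - 2*x) * (4 * y^2) = x^4 - 2 * of_int a * x^2 - 8 * of_int b * x + (of_int a)^2" .
    note H = this
    have "(of_int (Phi a b m e) :: rat) = of_int e^4 * ((l^2 - 2*x) * (4 * y^2))" unfolding H ph by simp
    also have "\<dots> = (l^2 - 2*x) * (4 * of_int e ^ 4 * y^2)" by (simp add: algebra_simps)
    also have "\<dots> = (l^2 - 2*x) * of_int (Psi a b m e)" by (simp only: ps)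
    finally have "of_int (Phi a b m e) = (l^2 - 2*x) * (of_int (Psi a b m e) :: rat)" .
    moreover have "(of_int (Psi a b m e) :: rat) \<noteq> 0" using ps y0 e0 by simp
    ultimately show ?thesis by (simp add: field_simps)
  qed
  finally show "xc (ec_add a b (Pt x y) (Pt x y)) = of_int (Phi a b m e) / of_int (Psi a b m e)" .
qed

definition KD :: "int \<Rightarrow> int \<Rightarrow> int" where
  "KD a b = (\<bar>0\<bar> + \<bar>12\<bar> + \<bar>0\<bar> + \<bar>16*a\<bar>) + (\<bar>-3\<bar> + \<bar>0\<bar> + \<bar>5*a\<bar> + \<bar>27*b\<bar>)
     + (\<bar>108*b^2 + 16*a^3\<bar> + \<bar>-4*a^2*b\<bar> + \<bar>88*a*b^2 + 12*a^4\<bar> + \<bar>96*b^3 + 12*a^3*b\<bar>)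
     + (\<bar>a^2*b\<bar> + \<bar>32*a*b^2 + 5*a^4\<bar> + \<bar>192*b^3 + 26*a^3*b\<bar> + \<bar>-24*a^2*b^2 - 3*a^5\<bar>)"

lemma KD_pos: "KD a b > 0" unfolding KD_def by (auto intro!: add_pos_nonneg add_nonneg_nonneg)

lemma dup_bound:
  fixes x y :: rat and a b :: int
  assumes ell: "elliptic a b" and y0: "y \<noteq> 0" and c: "y^2 = x^3 + of_int a * x + of_int b"
  shows "Hq x ^ 4 \<le> KD a b * Hq (xc (ec_add a b (Pt x y) (Pt x y)))"
proof -
  obtain m e where q: "quotient_of x = (m, e)" by (cases "quotient_of x")
  have e0: "e > 0" using quotient_of_denom_pos[OF q] .
  have cop: "coprime m e" using quotient_of_coprime[OF q] .
  define M where "M = Hq x"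
  have M: "M = max \<bar>m\<bar> \<bar>e\<bar>" unfolding M_def Hq_def q by simp
  have M1: "M \<ge> 1" unfolding M_def by (rule Hq_ge1)
  let ?Phi = "Phi a b m e" and ?Psi = "Psi a b m e"
  let ?x' = "xc (ec_add a b (Pt x y) (Pt x y))"
  have x': "?x' = of_int ?Phi / of_int ?Psi" and Psi0: "?Psi \<noteq> 0" using dup_x[OF y0 c q] by auto
  obtain k where k: "k \<noteq> 0" "k dvd ?Phi" "k dvd ?Psi" and mx: "max \<bar>?Phi\<bar> \<bar>?Psi\<bar> = \<bar>k\<bar> * Hq ?x'"
    using H_frac[OF Psi0 x'] by blast
  define hx where "hx = Hq ?x'"
  have hx1: "hx \<ge> 1" unfolding hx_def by (rule Hq_ge1)
  note mx = mx[folded hx_def]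
  define D where "D = 4*(4*a^3+27*b^2)"
  have D0: "D \<noteq> 0" using ell unfolding D_def elliptic_def by simp
  let ?f1 = "bin3 0 12 0 (16*a) m e" and ?g1 = "bin3 (-3) 0 (5*a) (27*b) m e"
  let ?f2 = "bin3 (108*b^2 + 16*a^3) (-4*a^2*b) (88*a*b^2 + 12*a^4) (96*b^3 + 12*a^3*b) m e"
  let ?g2 = "bin3 (a^2*b) (32*a*b^2 + 5*a^4) (192*b^3 + 26*a^3*b) (-24*a^2*b^2 - 3*a^5) m e"
  have C1: "?f1 * ?Phi + ?g1 * ?Psi = D * e^7" unfolding D_def by (rule certD1)
  have C2: "?f2 * ?Phi + ?g2 * ?Psi = D * m^7" unfolding D_def by (rule certD2)
  have "k dvd D * e^7" unfolding C1[symmetric] using k by simp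
  moreover have "k dvd D * m^7" unfolding C2[symmetric] using k by simp
  ultimately have "k dvd D" using dvd2[OF cop] by blast
  then have kD: "\<bar>k\<bar> \<le> \<bar>D\<bar>" using D0 by (simp add: dvd_imp_le_int)
  have "M \<ge> 0" using M1 by simp
  have mM: "\<bar>m\<bar> \<le> M" and eM: "\<bar>e\<bar> \<le> M" unfolding M by auto
  let ?mx = "max \<bar>?Phi\<bar> \<bar>?Psi\<bar>"
  have key: "\<bar>f * ?Phi + g * ?Psi\<bar> \<le> (Kf + Kg) * M^3 * ?mx"
    if "\<bar>f\<bar> \<le> Kf * M^3" "\<bar>g\<bar> \<le> Kg * M^3" for f g Kf Kg
  proof -
    have "\<bar>f * ?Phi + g * ?Psi\<bar> \<le> \<bar>f\<bar> * \<bar>?Phi\<bar> + \<bar>g\<bar> * \<bar>?Psi\<bar>"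
      by (metis abs_mult abs_triangle_ineq)
    also have "\<dots> \<le> (Kf * M^3) * ?mx + (Kg * M^3) * ?mx"
      by (intro add_mono mult_mono) (use that in auto)
    finally show ?thesis by (simp add: algebra_simps)
  qed
  have b1: "\<bar>D * e^7\<bar> \<le> KD a b * M^3 * ?mx"
  proof -
    have "\<bar>D * e^7\<bar> \<le> ((\<bar>0\<bar> + \<bar>12\<bar> + \<bar>0\<bar> + \<bar>16*a\<bar>) + (\<bar>-3\<bar> + \<bar>0\<bar> + \<bar>5*a\<bar> + \<bar>27*b\<bar>)) * M^3 * ?mx"
      unfolding C1[symmetric] by (intro key bin3_bd mM eM)
    also have "\<dots> \<le> KD a b * M^3 * ?mx"
      unfolding KD_def by (intro mult_right_mono) (use \<open>M \<ge> 0\<close> in auto)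
    finally show ?thesis .
  qed
  have b2: "\<bar>D * m^7\<bar> \<le> KD a b * M^3 * ?mx"
  proof -
    have "\<bar>D * m^7\<bar> \<le> ((\<bar>108*b^2 + 16*a^3\<bar> + \<bar>-4*a^2*b\<bar> + \<bar>88*a*b^2 + 12*a^4\<bar> + \<bar>96*b^3 + 12*a^3*b\<bar>)
     + (\<bar>a^2*b\<bar> + \<bar>32*a*b^2 + 5*a^4\<bar> + \<bar>192*b^3 + 26*a^3*b\<bar> + \<bar>-24*a^2*b^2 - 3*a^5\<bar>)) * M^3 * ?mx"
      unfolding C2[symmetric] by (intro key bin3_bd mM eM)
    also have "\<dots> \<le> KD a b * M^3 * ?mx"
      unfolding KD_def by (intro mult_right_mono) (use \<open>M \<ge> 0\<close> in auto)
    finally show ?thesis .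
  qed
  have "\<bar>D\<bar> * M^7 \<le> KD a b * M^3 * ?mx"
  proof (cases "\<bar>m\<bar> \<le> \<bar>e\<bar>")
    case True
    then have "M = \<bar>e\<bar>" unfolding M by simp
    then show ?thesis using b1 by (simp add: abs_mult power_abs)
  next
    case False
    then have "M = \<bar>m\<bar>" unfolding M by simp
    then show ?thesis using b2 by (simp add: abs_mult power_abs)
  qed
  also have "\<dots> \<le> KD a b * M^3 * (\<bar>D\<bar> * hx)"
    unfolding mx by (intro mult_left_mono mult_right_mono) (use kD KD_pos[of a b] M1 hx1 in auto)
  finally have "\<bar>D\<bar> * (M^3 * M^4) \<le> \<bar>D\<bar> * (M^3 * (KD a b * hx))"
    by (simp add: algebra_simps power_add[symmetric])
  moreover have D': "\<bar>D\<bar> > 0" using D0 by simp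
  ultimately have A: "M^3 * M^4 \<le> M^3 * (KD a b * hx)" using mult_le_cancel_left_pos by blast
  have "M^3 > 0" using M1 by simp
  then have "M^4 \<le> KD a b * hx" using A mult_le_cancel_left_pos by blast
  then show ?thesis unfolding M_def hx_def .
qed

lemma sd_sum:
  fixes x1 x2 y1 y2 :: rat and a b :: int
  assumes c1: "y1^2 = x1^3 + of_int a * x1 + of_int b" and c2: "y2^2 = x2^3 + of_int a * x2 + of_int b"
    and ne: "x1 \<noteq> x2"
  shows "(xc (ec_add a b (Pt x2 y2) (Pt x1 y1)) + xc (ec_add a b (Pt x1 y1) (Pt x2 (-y2)))) * (x1 - x2)^2
          = 2 * (x1*x2 + of_int a) * (x1 + x2) + 4 * of_int b"
    and "(xc (ec_add a b (Pt x2 y2) (Pt x1 y1)) * xc (ec_add a b (Pt x1 y1) (Pt x2 (-y2)))) * (x1 - x2)^2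
          = (x1*x2 - of_int a)^2 - 4 * of_int b * (x1 + x2)"
proof -
  define l where "l = (y1 - y2) / (x1 - x2)"
  define l' where "l' = (- y2 - y1) / (x2 - x1)"
  have ne': "x2 \<noteq> x1" using ne by simp
  have hl: "l * (x1 - x2) = y1 - y2" unfolding l_def using ne by simp
  have hl': "l' * (x2 - x1) = - y2 - y1" unfolding l'_def using ne by simp
  have X3: "xc (ec_add a b (Pt x2 y2) (Pt x1 y1)) = l^2 - x2 - x1"
    using ne' unfolding l_def by (simp add: Let_def)
  have X4: "xc (ec_add a b (Pt x1 y1) (Pt x2 (-y2))) = l'^2 - x1 - x2"
    using ne unfolding l'_def by (simp add: Let_def)
  show "(xc (ec_add a b (Pt x2 y2) (Pt x1 y1)) + xc (ec_add a b (Pt x1 y1) (Pt x2 (-y2)))) * (x1 - x2)^2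
          = 2 * (x1*x2 + of_int a) * (x1 + x2) + 4 * of_int b"
    unfolding X3 X4 using hl hl' c1 c2 ne by algebra
  show "(xc (ec_add a b (Pt x2 y2) (Pt x1 y1)) * xc (ec_add a b (Pt x1 y1) (Pt x2 (-y2)))) * (x1 - x2)^2
          = (x1*x2 - of_int a)^2 - 4 * of_int b * (x1 + x2)"
    unfolding X3 X4 using hl hl' c1 c2 ne by algebra
qed

declare [[linarith_split_limit = 0]]

lemma T_lower:
  fixes m1 e1 m2 e2 :: int
  assumes "e1 > 0" "e2 > 0"
  shows "max \<bar>m1\<bar> \<bar>e1\<bar> * max \<bar>m2\<bar> \<bar>e2\<bar> \<le> 2 * max \<bar>e1*e2\<bar> (max \<bar>m1*e2+m2*e1\<bar> \<bar>m1*m2\<bar>)"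
proof -
  have t: "\<bar>m1*e2\<bar> \<le> \<bar>m1*e2+m2*e1\<bar> + \<bar>m2*e1\<bar>" "\<bar>m2*e1\<bar> \<le> \<bar>m1*e2+m2*e1\<bar> + \<bar>m1*e2\<bar>"
    using abs_triangle_ineq[of "m1*e2+m2*e1" "-(m2*e1)"] abs_triangle_ineq[of "m1*e2+m2*e1" "-(m1*e2)"] by simp_all
  have ab: "\<bar>m1*e2\<bar> = \<bar>m1\<bar>*e2" "\<bar>m2*e1\<bar> = \<bar>m2\<bar>*e1" "\<bar>m1*m2\<bar> = \<bar>m1\<bar>*\<bar>m2\<bar>" "\<bar>e1*e2\<bar> = e1*e2"
    using assms by (auto simp: abs_mult)
  define mx where "mx = max \<bar>e1*e2\<bar> (max \<bar>m1*e2+m2*e1\<bar> \<bar>m1*m2\<bar>)"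
  have hm: "\<bar>e1*e2\<bar> \<le> mx" "\<bar>m1*e2+m2*e1\<bar> \<le> mx" "\<bar>m1*m2\<bar> \<le> mx" unfolding mx_def by (simp_all add: le_max_iff_disj)
  have e: "\<bar>e1\<bar> = e1" "\<bar>e2\<bar> = e2" using assms by auto
  consider "\<bar>m1\<bar> \<ge> e1" "\<bar>m2\<bar> \<ge> e2" | "\<bar>m1\<bar> \<le> e1" "\<bar>m2\<bar> \<le> e2" | "\<bar>m1\<bar> \<ge> e1" "\<bar>m2\<bar> \<le> e2"
     | "\<bar>m1\<bar> \<le> e1" "\<bar>m2\<bar> \<ge> e2" by linarith
  then have "max \<bar>m1\<bar> e1 * max \<bar>m2\<bar> e2 \<le> 2 * mx"
  proof cases
    case 1
    then have "max \<bar>m1\<bar> e1 * max \<bar>m2\<bar> e2 = \<bar>m1\<bar>*\<bar>m2\<bar>" by (simp add: max_def)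
    then show ?thesis using hm ab by linarith
  next
    case 2
    then have "max \<bar>m1\<bar> e1 * max \<bar>m2\<bar> e2 = e1*e2" by (simp add: max_def)
    then show ?thesis using hm ab by linarith
  next
    case 3
    then have eq: "max \<bar>m1\<bar> e1 * max \<bar>m2\<bar> e2 = \<bar>m1\<bar>*e2" by (simp add: max_def)
    have "\<bar>m2\<bar>*e1 \<le> \<bar>m2\<bar>*\<bar>m1\<bar>" by (rule mult_left_mono) (use 3 in auto)
    moreover have "\<bar>m2\<bar>*\<bar>m1\<bar> = \<bar>m1\<bar>*\<bar>m2\<bar>" by (rule mult.commute)
    ultimately show ?thesis unfolding eq using hm ab t by linarith
  next
    case 4
    then have eq: "max \<bar>m1\<bar> e1 * max \<bar>m2\<bar> e2 = e1*\<bar>m2\<bar>" by (simp add: max_def)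
    have "\<bar>m1\<bar>*e2 \<le> \<bar>m1\<bar>*\<bar>m2\<bar>" by (rule mult_left_mono) (use 4 in auto)
    moreover have "e1*\<bar>m2\<bar> = \<bar>m2\<bar>*e1" by (rule mult.commute)
    ultimately show ?thesis unfolding eq using hm ab t by linarith
  qed
  then show ?thesis unfolding mx_def e .
qed

declare [[linarith_split_limit = 9]]

definition KS :: "int \<Rightarrow> int \<Rightarrow> int" where
  "KS a b = 1 + ((\<bar>-16*a^2\<bar> + \<bar>24*b\<bar> + \<bar>8*a\<bar>) + (\<bar>54*b\<bar> + \<bar>5*a\<bar> + \<bar>-3\<bar>) + (\<bar>32*a\<bar> + \<bar>6\<bar>)
   + (\<bar>216*b^2 + 32*a^3\<bar> + \<bar>96*b^2\<bar> + \<bar>128*a*b\<bar>) + (\<bar>-64*a*b\<bar> + \<bar>96*b\<bar> + \<bar>16*a^3\<bar> + \<bar>16*a^2\<bar>)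
   + (\<bar>-32*a^2\<bar> + \<bar>-64*a*b\<bar> + \<bar>-192*b\<bar>)
   + (\<bar>-108*a*b^2 - 16*a^4\<bar> + \<bar>-16*a*b^3 - 2*a^4*b\<bar> + \<bar>56*a^2*b^2 + 8*a^5\<bar> + \<bar>-192*b^3 - 26*a^3*b\<bar>)
   + (\<bar>96*b^3 + 13*a^3*b\<bar> + \<bar>2*a^2*b\<bar> + \<bar>-24*a^2*b^2 - 3*a^5\<bar> + \<bar>32*a*b^2 + 5*a^4\<bar>)
   + (\<bar>44*a*b^2 + 6*a^4\<bar> + \<bar>216*b^2 + 32*a^3\<bar> + \<bar>96*b^3 + 12*a^3*b\<bar> + \<bar>-4*a^2*b\<bar>))"

lemma KS_pos: "KS a b > 0"
proof -
  have "0 \<le> KS a b - 1" unfolding KS_def by (simp only: add_diff_cancel_left') (intro add_nonneg_nonneg abs_ge_zero)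
  then show ?thesis by simp
qed

lemma key3:
  fixes c0 c1 c2 W0 W1 W2 K0 K1 K2 T mW :: int
  assumes "\<bar>c0\<bar> \<le> K0 * T^2" "\<bar>c1\<bar> \<le> K1 * T^2" "\<bar>c2\<bar> \<le> K2 * T^2"
    and "\<bar>W0\<bar> \<le> mW" "\<bar>W1\<bar> \<le> mW" "\<bar>W2\<bar> \<le> mW"
  shows "\<bar>c0 * W0 + c1 * W1 + c2 * W2\<bar> \<le> (K0 + K1 + K2) * T^2 * mW"
proof -
  have "\<bar>c0 * W0 + c1 * W1 + c2 * W2\<bar> \<le> \<bar>c0 * W0 + c1 * W1\<bar> + \<bar>c2 * W2\<bar>" by (rule abs_triangle_ineq)
  also have "\<dots> \<le> \<bar>c0 * W0\<bar> + \<bar>c1 * W1\<bar> + \<bar>c2 * W2\<bar>" using abs_triangle_ineq[of "c0*W0" "c1*W1"] by (rule add_right_mono)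
  also have "\<dots> = \<bar>c0\<bar> * \<bar>W0\<bar> + \<bar>c1\<bar> * \<bar>W1\<bar> + \<bar>c2\<bar> * \<bar>W2\<bar>" by (simp add: abs_mult)
  also have "\<dots> \<le> (K0 * T^2) * mW + (K1 * T^2) * mW + (K2 * T^2) * mW"
    by (intro add_mono mult_mono) (use assms in auto)
  finally show ?thesis by (simp add: algebra_simps)
qed

lemma KS_ge: "a1 + a2 + a3 \<le> KS a b" if "a1 + a2 + a3 = X" "X \<le> KS a b" for X a1 a2 a3 :: int
  using that by simp

lemma sd_bound:
  fixes x1 x2 y1 y2 :: rat and a b :: int
  assumes ell: "elliptic a b"
    and c1: "y1^2 = x1^3 + of_int a * x1 + of_int b" and c2: "y2^2 = x2^3 + of_int a * x2 + of_int b"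
    and ne: "x1 \<noteq> x2"
  shows "Hq x1^2 * Hq x2^2 \<le> 8 * KS a b * Hq (xc (ec_add a b (Pt x2 y2) (Pt x1 y1))) * Hq (xc (ec_add a b (Pt x1 y1) (Pt x2 (-y2))))"
proof -
  obtain m1 e1 where q1: "quotient_of x1 = (m1, e1)" by (cases "quotient_of x1")
  obtain m2 e2 where q2: "quotient_of x2 = (m2, e2)" by (cases "quotient_of x2")
  have e1: "e1 > 0" using quotient_of_denom_pos[OF q1] .
  have e2: "e2 > 0" using quotient_of_denom_pos[OF q2] .
  have cp1: "coprime m1 e1" using quotient_of_coprime[OF q1] .
  have cp2: "coprime m2 e2" using quotient_of_coprime[OF q2] .
  have xm1: "of_int m1 = x1 * of_int e1" using quotient_of_div[OF q1] e1 by (simp add: field_simps)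
  have xm2: "of_int m2 = x2 * of_int e2" using quotient_of_div[OF q2] e2 by (simp add: field_simps)
  define x3 where "x3 = xc (ec_add a b (Pt x2 y2) (Pt x1 y1))"
  define x4 where "x4 = xc (ec_add a b (Pt x1 y1) (Pt x2 (-y2)))"
  obtain p3 q3 where q3: "quotient_of x3 = (p3, q3)" by (cases "quotient_of x3")
  obtain p4 q4 where q4: "quotient_of x4 = (p4, q4)" by (cases "quotient_of x4")
  have q3p: "q3 > 0" using quotient_of_denom_pos[OF q3] .
  have q4p: "q4 > 0" using quotient_of_denom_pos[OF q4] .
  have cp3: "coprime p3 q3" using quotient_of_coprime[OF q3] .
  have cp4: "coprime p4 q4" using quotient_of_coprime[OF q4] .
  have xp3: "of_int p3 = x3 * of_int q3" using quotient_of_div[OF q3] q3p by (simp add: field_simps)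
  have xp4: "of_int p4 = x4 * of_int q4" using quotient_of_div[OF q4] q4p by (simp add: field_simps)
  define t0 where "t0 = e1*e2"
  define t1 where "t1 = m1*e2+m2*e1"
  define t2 where "t2 = m1*m2"
  define W0 where "W0 = WW0 a b t0 t1 t2"
  define W1 where "W1 = WW1 a b t0 t1 t2"
  define W2 where "W2 = WW2 a b t0 t1 t2"
  define T0 where "T0 = q3*q4"
  define T1 where "T1 = p3*q4+p4*q3"
  define T2 where "T2 = p3*p4"
  define E :: rat where "E = (of_int e1)^2 * (of_int e2)^2"
  have E0: "E \<noteq> 0" unfolding E_def using e1 e2 by simp
  have R0: "of_int W0 = E * (x1 - x2)^2"
    unfolding W0_def WW0_def E_def t0_def t1_def t2_def
    by (simp add: xm1 xm2 algebra_simps power2_eq_square)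
  have R1: "of_int W1 = E * (2 * (x1*x2 + of_int a) * (x1 + x2) + 4 * of_int b)"
    unfolding W1_def WW1_def E_def t0_def t1_def t2_def
    by (simp add: xm1 xm2 algebra_simps power2_eq_square)
  have R2: "of_int W2 = E * ((x1*x2 - of_int a)^2 - 4 * of_int b * (x1 + x2))"
    unfolding W2_def WW2_def E_def t0_def t1_def t2_def
    by (simp add: xm1 xm2 algebra_simps power2_eq_square)
  have S1: "(x3 + x4) * (x1 - x2)^2 = 2 * (x1*x2 + of_int a) * (x1 + x2) + 4 * of_int b"
    and S2: "(x3 * x4) * (x1 - x2)^2 = (x1*x2 - of_int a)^2 - 4 * of_int b * (x1 + x2)"
    unfolding x3_def x4_def using sd_sum[OF c1 c2 ne] by auto
  have W00: "W0 \<noteq> 0"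
  proof
    assume "W0 = 0"
    then have "E * (x1 - x2)^2 = 0" using R0 by simp
    then show False using E0 ne by simp
  qed
  have "of_int (T1 * W0) = (of_int (W1 * T0) :: rat)"
  proof -
    have "of_int (T1 * W0) = (of_int p3 * of_int q4 + of_int p4 * of_int q3) * (E * (x1 - x2)^2)"
      unfolding T1_def by (simp add: R0)
    also have "\<dots> = of_int q3 * of_int q4 * E * ((x3 + x4) * (x1 - x2)^2)"
      by (simp add: xp3 xp4 algebra_simps)
    also have "\<dots> = of_int (W1 * T0)" unfolding S1 T0_def by (simp add: R1 algebra_simps)
    finally show ?thesis .
  qed
  then have TW1: "T1 * W0 = W1 * T0" by (simp only: of_int_eq_iff)
  have "of_int (T2 * W0) = (of_int (W2 * T0) :: rat)"
  proof -
    have "of_int (T2 * W0) = (of_int p3 * of_int p4) * (E * (x1 - x2)^2)"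
      unfolding T2_def by (simp add: R0)
    also have "\<dots> = of_int q3 * of_int q4 * E * ((x3 * x4) * (x1 - x2)^2)"
      by (simp add: xp3 xp4 algebra_simps)
    also have "\<dots> = of_int (W2 * T0)" unfolding S2 T0_def by (simp add: R2 algebra_simps)
    finally show ?thesis .
  qed
  then have TW2: "T2 * W0 = W2 * T0" by (simp only: of_int_eq_iff)
  have primT: "gcd T0 (gcd T1 T2) = 1" unfolding T0_def T1_def T2_def by (rule prim3[OF cp3 cp4])
  have primt: "gcd t0 (gcd t1 t2) = 1" unfolding t0_def t1_def t2_def by (rule prim3[OF cp1 cp2])
  have T00: "T0 \<noteq> 0" unfolding T0_def using q3p q4p by simp
  have "T0 dvd W0 * T0^1" by simp
  moreover have "T0 dvd W0 * T1^1" using TW1 by (simp add: mult.commute)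
  moreover have "T0 dvd W0 * T2^1" using TW2 by (simp add: mult.commute)
  ultimately have "T0 dvd W0" using dvd3[OF primT] by blast
  then obtain k where k: "W0 = T0 * k" by blast
  have k0: "k \<noteq> 0" using W00 k by auto
  have kW1: "W1 = T1 * k" using TW1 T00 unfolding k by (simp add: algebra_simps)
  have kW2: "W2 = T2 * k" using TW2 T00 unfolding k by (simp add: algebra_simps)
  define D where "D = 8*(4*a^3+27*b^2)"
  have D0: "D \<noteq> 0" using ell unfolding D_def elliptic_def by simp
  let ?c00 = "tern2 (-16*a^2) 0 0 (24*b) (8*a) 0 t0 t1 t2"
  let ?c10 = "tern2 (54*b) 0 0 (5*a) 0 (-3) t0 t1 t2"
  let ?c20 = "tern2 (32*a) 6 0 0 0 0 t0 t1 t2"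
  let ?c01 = "tern2 0 (216*b^2 + 32*a^3) 0 0 (96*b^2) (128*a*b) t0 t1 t2"
  let ?c11 = "tern2 0 (-64*a*b) (96*b) (16*a^3) 0 (16*a^2) t0 t1 t2"
  let ?c21 = "tern2 0 (-32*a^2) 0 (-64*a*b) 0 (-192*b) t0 t1 t2"
  let ?c02 = "tern2 0 0 (-108*a*b^2 - 16*a^4) (-16*a*b^3 - 2*a^4*b) (56*a^2*b^2 + 8*a^5) (-192*b^3 - 26*a^3*b) t0 t1 t2"
  let ?c12 = "tern2 0 (96*b^3 + 13*a^3*b) (2*a^2*b) (-24*a^2*b^2 - 3*a^5) 0 (32*a*b^2 + 5*a^4) t0 t1 t2"
  let ?c22 = "tern2 0 (44*a*b^2 + 6*a^4) (216*b^2 + 32*a^3) (96*b^3 + 12*a^3*b) 0 (-4*a^2*b) t0 t1 t2"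
  have C0: "?c00 * W0 + ?c10 * W1 + ?c20 * W2 = D * t0^4" unfolding W0_def W1_def W2_def D_def by (rule certS0)
  have C1: "?c01 * W0 + ?c11 * W1 + ?c21 * W2 = D * t1^4" unfolding W0_def W1_def W2_def D_def by (rule certS1)
  have C2: "?c02 * W0 + ?c12 * W1 + ?c22 * W2 = D * t2^4" unfolding W0_def W1_def W2_def D_def by (rule certS2)
  have kW: "k dvd W0" "k dvd W1" "k dvd W2" unfolding k kW1 kW2 by auto
  have "k dvd D * t0^4" unfolding C0[symmetric] using kW by simp
  moreover have "k dvd D * t1^4" unfolding C1[symmetric] using kW by simp
  moreover have "k dvd D * t2^4" unfolding C2[symmetric] using kW by simp
  ultimately have "k dvd D" using dvd3[OF primt] by blast
  then have kD: "\<bar>k\<bar> \<le> \<bar>D\<bar>" using D0 by (simp add: dvd_imp_le_int)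
  define H3 where "H3 = Hq x3"
  define H4 where "H4 = Hq x4"
  have H3: "\<bar>p3\<bar> \<le> H3" "\<bar>q3\<bar> \<le> H3" unfolding H3_def Hq_def q3 by auto
  have H4: "\<bar>p4\<bar> \<le> H4" "\<bar>q4\<bar> \<le> H4" unfolding H4_def Hq_def q4 by auto
  have H3p: "H3 \<ge> 1" unfolding H3_def by (rule Hq_ge1)
  have H4p: "H4 \<ge> 1" unfolding H4_def by (rule Hq_ge1)
  have pm: "\<bar>u * v\<bar> \<le> H3 * H4" if "\<bar>u\<bar> \<le> H3" "\<bar>v\<bar> \<le> H4" for u v :: int
    unfolding abs_mult by (intro mult_mono) (use that in auto)
  have bT0: "\<bar>T0\<bar> \<le> 2 * (H3 * H4)" unfolding T0_def using pm[OF H3(2) H4(2)] H3p H4p by simp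
  have bT2: "\<bar>T2\<bar> \<le> 2 * (H3 * H4)" unfolding T2_def using pm[OF H3(1) H4(1)] H3p H4p by simp
  have bT1: "\<bar>T1\<bar> \<le> 2 * (H3 * H4)"
  proof -
    have "\<bar>T1\<bar> \<le> \<bar>p3*q4\<bar> + \<bar>q3*p4\<bar>" unfolding T1_def by (metis abs_triangle_ineq mult.commute)
    then show ?thesis using pm[OF H3(1) H4(2)] pm[OF H3(2) H4(1)] by simp
  qed
  define mW where "mW = 2 * \<bar>D\<bar> * (H3 * H4)"
  have bW: "\<bar>W0\<bar> \<le> mW" "\<bar>W1\<bar> \<le> mW" "\<bar>W2\<bar> \<le> mW"
  proof -
    have "\<bar>T * k\<bar> \<le> mW" if "\<bar>T\<bar> \<le> 2 * (H3 * H4)" for T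
    proof -
      have "\<bar>T * k\<bar> = \<bar>T\<bar> * \<bar>k\<bar>" by (simp add: abs_mult)
      also have "\<dots> \<le> (2 * (H3 * H4)) * \<bar>D\<bar>" by (intro mult_mono that kD) (use H3p H4p in auto)
      finally show ?thesis unfolding mW_def by (simp add: algebra_simps)
    qed
    then show "\<bar>W0\<bar> \<le> mW" "\<bar>W1\<bar> \<le> mW" "\<bar>W2\<bar> \<le> mW" unfolding k kW1 kW2
      using bT0 bT1 bT2 by (auto simp: mult.commute)
  qed
  define T where "T = max \<bar>t0\<bar> (max \<bar>t1\<bar> \<bar>t2\<bar>)"
  have tT: "\<bar>t0\<bar> \<le> T" "\<bar>t1\<bar> \<le> T" "\<bar>t2\<bar> \<le> T" unfolding T_def by (simp_all add: le_max_iff_disj)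
  have Tpos: "T > 0" using tT(1) e1 e2 unfolding t0_def by (smt (verit) mult_pos_pos)
  have main: "\<bar>D\<bar> * T^4 \<le> KS a b * T^2 * mW"
  proof -
    have "\<bar>D * t0^4\<bar> \<le> ((\<bar>-16*a^2\<bar> + \<bar>0\<bar> + \<bar>0\<bar> + \<bar>24*b\<bar> + \<bar>8*a\<bar> + \<bar>0\<bar>) + (\<bar>54*b\<bar> + \<bar>0\<bar> + \<bar>0\<bar> + \<bar>5*a\<bar> + \<bar>0\<bar> + \<bar>-3\<bar>) + (\<bar>32*a\<bar> + \<bar>6\<bar> + \<bar>0\<bar> + \<bar>0\<bar> + \<bar>0\<bar> + \<bar>0\<bar>)) * T^2 * mW"
      unfolding C0[symmetric] by (intro key3 tern2_bd tT bW)
    also have "\<dots> \<le> KS a b * T^2 * mW"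
      unfolding KS_def using bW(1) by (intro mult_right_mono) auto
    finally have j0: "\<bar>D * t0^4\<bar> \<le> KS a b * T^2 * mW" .
    have "\<bar>D * t1^4\<bar> \<le> ((\<bar>0\<bar> + \<bar>216*b^2 + 32*a^3\<bar> + \<bar>0\<bar> + \<bar>0\<bar> + \<bar>96*b^2\<bar> + \<bar>128*a*b\<bar>) + (\<bar>0\<bar> + \<bar>-64*a*b\<bar> + \<bar>96*b\<bar> + \<bar>16*a^3\<bar> + \<bar>0\<bar> + \<bar>16*a^2\<bar>) + (\<bar>0\<bar> + \<bar>-32*a^2\<bar> + \<bar>0\<bar> + \<bar>-64*a*b\<bar> + \<bar>0\<bar> + \<bar>-192*b\<bar>)) * T^2 * mW"
      unfolding C1[symmetric] by (intro key3 tern2_bd tT bW)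
    also have "\<dots> \<le> KS a b * T^2 * mW"
      unfolding KS_def using bW(1) by (intro mult_right_mono) auto
    finally have j1: "\<bar>D * t1^4\<bar> \<le> KS a b * T^2 * mW" .
    have "\<bar>D * t2^4\<bar> \<le> ((\<bar>0\<bar> + \<bar>0\<bar> + \<bar>-108*a*b^2 - 16*a^4\<bar> + \<bar>-16*a*b^3 - 2*a^4*b\<bar> + \<bar>56*a^2*b^2 + 8*a^5\<bar> + \<bar>-192*b^3 - 26*a^3*b\<bar>) + (\<bar>0\<bar> + \<bar>96*b^3 + 13*a^3*b\<bar> + \<bar>2*a^2*b\<bar> + \<bar>-24*a^2*b^2 - 3*a^5\<bar> + \<bar>0\<bar> + \<bar>32*a*b^2 + 5*a^4\<bar>) + (\<bar>0\<bar> + \<bar>44*a*b^2 + 6*a^4\<bar> + \<bar>216*b^2 + 32*a^3\<bar> + \<bar>96*b^3 + 12*a^3*b\<bar> + \<bar>0\<bar> + \<bar>-4*a^2*b\<bar>)) * T^2 * mW"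
      unfolding C2[symmetric] by (intro key3 tern2_bd tT bW)
    also have "\<dots> \<le> KS a b * T^2 * mW"
      unfolding KS_def using bW(1) by (intro mult_right_mono) auto
    finally have j2: "\<bar>D * t2^4\<bar> \<le> KS a b * T^2 * mW" .
    have "T = \<bar>t0\<bar> \<or> T = \<bar>t1\<bar> \<or> T = \<bar>t2\<bar>" unfolding T_def by (auto simp: max_def)
    then show ?thesis using j0 j1 j2 by (auto simp: abs_mult power_abs)
  qed
  have "\<bar>D\<bar> * (T^2 * T^2) \<le> \<bar>D\<bar> * (T^2 * (2 * KS a b * (H3 * H4)))"
    using main unfolding mW_def by (simp add: algebra_simps power_add[symmetric])
  moreover have D': "\<bar>D\<bar> > 0" using D0 by simp
  ultimately have A: "T^2 * T^2 \<le> T^2 * (2 * KS a b * (H3 * H4))" using mult_le_cancel_left_pos by blast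
  have "T^2 > 0" using Tpos by simp
  then have TT: "T^2 \<le> 2 * KS a b * (H3 * H4)" using A mult_le_cancel_left_pos by blast
  have "Hq x1 * Hq x2 \<le> 2 * T"
    using T_lower[OF e1 e2, of m1 m2] e1 e2 unfolding Hq_def q1 q2 T_def t0_def t1_def t2_def by simp
  then have "(Hq x1 * Hq x2)^2 \<le> (2 * T)^2"
    using Hq_ge1[of x1] Hq_ge1[of x2] by (intro power_mono) auto
  also have "\<dots> = 4 * T^2" by (simp add: power_mult_distrib)
  also have "\<dots> \<le> 4 * (2 * KS a b * (H3 * H4))" using TT by (simp add: algebra_simps)
  finally show ?thesis unfolding H3_def H4_def x3_def x4_def by (simp add: power_mult_distrib algebra_simps)
qed

lemma curve_gen:
  fixes x1 x2 y1 y2 l :: rat and a b :: int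
  assumes c1: "y1^2 = x1^3 + of_int a * x1 + of_int b" and c2: "y2^2 = x2^3 + of_int a * x2 + of_int b"
    and ne: "x1 \<noteq> x2" and hl: "l * (x2 - x1) = y2 - y1"
  shows "(l * (x1 - (l^2 - x1 - x2)) - y1)^2 = (l^2 - x1 - x2)^3 + of_int a * (l^2 - x1 - x2) + of_int b"
  using c1 c2 ne hl by algebra

lemma curve_dbl:
  fixes x1 y1 l :: rat and a b :: int
  assumes c1: "y1^2 = x1^3 + of_int a * x1 + of_int b" and hl: "l * (2 * y1) = 3 * x1^2 + of_int a"
  shows "(l * (x1 - (l^2 - x1 - x1)) - y1)^2 = (l^2 - x1 - x1)^3 + of_int a * (l^2 - x1 - x1) + of_int b"
  using c1 hl by algebra

lemma on_curve_add:
  assumes "on_curve a b P" "on_curve a b Q"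
  shows "on_curve a b (ec_add a b P Q)"
proof (cases P)
  case Inf
  then show ?thesis using assms by simp
next
  case (Pt x1 y1)
  show ?thesis
  proof (cases Q)
    case Inf
    then show ?thesis using assms Pt by simp
  next
    case (Pt x2 y2)
    note P = \<open>P = Pt x1 y1\<close>
    have c1: "y1^2 = x1^3 + of_int a * x1 + of_int b" using assms(1) P by (simp add: on_curve_def)
    have c2: "y2^2 = x2^3 + of_int a * x2 + of_int b" using assms(2) Pt by (simp add: on_curve_def)
    show ?thesis
    proof (cases "x1 = x2 \<and> y1 = - y2")
      case True
      then show ?thesis using P Pt by (simp add: on_curve_def)
    next
      case nt: False
      show ?thesis
      proof (cases "x1 = x2")
        case True
        have "y2 = y1 \<or> y2 = - y1"
        proof -
          have "y2^2 = y1^2" using c1 c2 True by simp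
          then show ?thesis by (simp add: power2_eq_iff)
        qed
        then have y: "y2 = y1" using nt True by auto
        have y0: "y1 \<noteq> 0" using nt True y by auto
        define l where "l = (3 * x1 ^ 2 + of_int a) / (2 * y1)"
        have hl: "l * (2 * y1) = 3 * x1^2 + of_int a" unfolding l_def using y0 by simp
        have "ec_add a b P Q = Pt (l^2 - x1 - x1) (l * (x1 - (l^2 - x1 - x1)) - y1)"
          using P Pt True y y0 unfolding l_def by (simp add: Let_def)
        then show ?thesis using curve_dbl[OF c1 hl] by (simp add: on_curve_def)
      next
        case False
        define l where "l = (y2 - y1) / (x2 - x1)"
        have hl: "l * (x2 - x1) = y2 - y1" unfolding l_def using False by simp
        have "ec_add a b P Q = Pt (l^2 - x1 - x2) (l * (x1 - (l^2 - x1 - x2)) - y1)"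
          using P Pt False unfolding l_def by (simp add: Let_def)
        then show ?thesis using curve_gen[OF c1 c2 False hl] by (simp add: on_curve_def)
      qed
    qed
  qed
qed

lemma on_curve_nmul: "on_curve a b P \<Longrightarrow> on_curve a b (ec_nmul a b k P)"
proof (induction k)
  case 0
  then show ?case by (simp add: on_curve_def)
next
  case (Suc k)
  then show ?case by (simp add: on_curve_add)
qed

lemma nmul_periodic:
  assumes "ec_nmul a b k P = Inf" "k > 0"
  shows "ec_nmul a b j P = ec_nmul a b (j mod k) P"
proof (induction j)
  case 0
  then show ?case by simp
next
  case (Suc j)
  have "ec_nmul a b (Suc j) P = ec_add a b P (ec_nmul a b (j mod k) P)" using Suc by simp
  also have "\<dots> = ec_nmul a b (Suc (j mod k)) P" by simp
  also have "\<dots> = ec_nmul a b (Suc j mod k) P"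
  proof (cases "Suc (j mod k) = k")
    case True
    then have "Suc j mod k = 0" by (metis mod_Suc)
    then show ?thesis using True assms(1) by simp
  next
    case False
    then have "Suc j mod k = Suc (j mod k)" by (metis mod_Suc)
    then show ?thesis by simp
  qed
  finally show ?case .
qed

lemma cancel:
  fixes p q :: rat
  assumes cP: "on_curve a b (Pt p q)" and cR: "on_curve a b R"
    and sum: "ec_add a b (Pt p q) R = Pt x3 y3" and ne: "x3 \<noteq> p"
  shows "ec_add a b (Pt x3 y3) (Pt p (-q)) = R"
proof (cases R)
  case Inf
  then show ?thesis using sum ne by simp
next
  case (Pt r s)
  have c1: "q^2 = p^3 + of_int a * p + of_int b" using cP by (simp add: on_curve_def)
  have c2: "s^2 = r^3 + of_int a * r + of_int b" using cR Pt by (simp add: on_curve_def)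
  have nt: "\<not> (p = r \<and> q = - s)"
  proof
    assume "p = r \<and> q = - s"
    then have "ec_add a b (Pt p q) R = Inf" using Pt by simp
    then show False using sum by simp
  qed
  define l' where "l' = (- q - y3) / (p - x3)"
  have ne': "p - x3 \<noteq> 0" using ne by simp
  have res: "ec_add a b (Pt x3 y3) (Pt p (-q)) = Pt (l'^2 - x3 - p) (l' * (x3 - (l'^2 - x3 - p)) - y3)"
    using ne unfolding l'_def by (simp add: Let_def)
  show ?thesis
  proof (cases "p = r")
    case True
    have "s = q \<or> s = - q"
    proof -
      have "s^2 = q^2" using c1 c2 True by simp
      then show ?thesis by (simp add: power2_eq_iff)
    qed
    then have y: "s = q" using nt True by auto
    have q0: "q \<noteq> 0" using nt True y by auto
    define l where "l = (3 * p ^ 2 + of_int a) / (2 * q)"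
    have "ec_add a b (Pt p q) R = Pt (l^2 - p - p) (l * (p - (l^2 - p - p)) - q)"
      using Pt True y q0 unfolding l_def by (simp add: Let_def)
    then have x3: "x3 = l^2 - p - p" and y3: "y3 = l * (p - x3) - q" using sum by auto
    have "l' = - l" unfolding l'_def y3 using ne' by (simp add: field_simps)
    then have e1: "l'^2 - x3 - p = p" and e2: "l' * (x3 - (l'^2 - x3 - p)) - y3 = q"
      unfolding y3 by (simp_all add: x3 algebra_simps power2_eq_square)
    have e2': "l' * (x3 - p) - y3 = q" using e2 unfolding e1 .
    have "ec_add a b (Pt x3 y3) (Pt p (-q)) = Pt p q" by (simp only: res e1 e2')
    then show ?thesis using Pt True y by simp
  next
    case False
    define l where "l = (s - q) / (r - p)"
    have hl: "l * (r - p) = s - q" unfolding l_def using False by simp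
    have "ec_add a b (Pt p q) R = Pt (l^2 - p - r) (l * (p - (l^2 - p - r)) - q)"
      using Pt False unfolding l_def by (simp add: Let_def)
    then have x3: "x3 = l^2 - p - r" and y3: "y3 = l * (p - x3) - q" using sum by auto
    have "l' = - l" unfolding l'_def y3 using ne' by (simp add: field_simps)
    then have "l'^2 - x3 - p = r" "l' * (x3 - (l'^2 - x3 - p)) - y3 = s"
      unfolding y3 using hl by (simp_all add: x3 algebra_simps power2_eq_square)
    then show ?thesis unfolding res Pt by simp
  qed
qed

lemma two_torsion_bound:
  fixes A :: rat and a b :: int
  assumes "A^3 + of_int a * A + of_int b = 0"
  shows "real_of_rat A \<le> 1 + \<bar>a\<bar> + \<bar>b\<bar>"
proof (rule ccontr)
  assume "\<not> ?thesis"
  then have big: "real_of_rat A > 1 + \<bar>a\<bar> + \<bar>b\<bar>" by simp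
  define x where "x = real_of_rat A"
  have eq: "x^3 + of_int a * x + of_int b = 0"
    using arg_cong[OF assms, of real_of_rat] unfolding x_def by (simp add: of_rat_add of_rat_mult of_rat_power)
  have x1: "x > 1" using big abs_ge_zero[of "real_of_int a"] abs_ge_zero[of "real_of_int b"] unfolding x_def by linarith
  have "x^3 = - (of_int a * x + of_int b)" using eq by simp
  also have "\<dots> \<le> \<bar>of_int a\<bar> * x + \<bar>of_int b\<bar>"
  proof -
    have "- of_int a * x \<le> \<bar>of_int a\<bar> * x" using x1 by (intro mult_right_mono) auto
    moreover have "- (of_int b :: real) \<le> \<bar>of_int b\<bar>" by simp
    ultimately show ?thesis by simp
  qed
  also have "\<dots> \<le> \<bar>of_int a\<bar> * x + \<bar>of_int b\<bar> * x" using x1 by (intro add_left_mono) (simp add: mult_le_cancel_left1)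
  finally have "x * x^2 \<le> x * (\<bar>of_int a\<bar> + \<bar>of_int b\<bar>)" by (simp add: algebra_simps power2_eq_square power3_eq_cube)
  then have "x^2 \<le> \<bar>of_int a\<bar> + \<bar>of_int b\<bar>" using x1 by simp
  moreover have "x^2 > x" using x1 by (simp add: power2_eq_square)
  ultimately show False using big unfolding x_def by simp
qed

lemma torsion_bound:
  assumes ell: "elliptic a b"
  shows "\<exists>M. \<forall>A B. torsion a b (Pt A B) \<longrightarrow> real_of_rat A \<le> M"
proof (intro exI allI impI)
  fix A B
  assume tor: "torsion a b (Pt A B)"
  define P where "P = Pt A B"
  have cP: "on_curve a b P" using tor unfolding torsion_def P_def by simp
  have cA: "B^2 = A^3 + of_int a * A + of_int b" using cP unfolding P_def on_curve_def by simp
  obtain k where k: "k > 0" "ec_nmul a b k P = Inf" using tor unfolding torsion_def P_def by blast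
  show "real_of_rat A \<le> max (1 + \<bar>a\<bar> + \<bar>b\<bar>) (real_of_int (max (KD a b) (8 * KS a b)))"
  proof (cases "B = 0")
    case True
    then have "A^3 + of_int a * A + of_int b = 0" using cA by simp
    then have "real_of_rat A \<le> 1 + \<bar>a\<bar> + \<bar>b\<bar>" by (rule two_torsion_bound)
    then show ?thesis by (rule order_trans[OF _ max.cobounded1])
  next
    case B0: False
    define Orb where "Orb = range (\<lambda>j. ec_nmul a b j P)"
    have "Orb = (\<lambda>j. ec_nmul a b j P) ` {..<k}"
    proof
      show "Orb \<subseteq> (\<lambda>j. ec_nmul a b j P) ` {..<k}"
      proof
        fix Q assume "Q \<in> Orb"
        then obtain j where "Q = ec_nmul a b j P" unfolding Orb_def by blast
        then have "Q = ec_nmul a b (j mod k) P" using nmul_periodic[OF k(2) k(1)] by simp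
        moreover have "j mod k < k" using k(1) by simp
        ultimately show "Q \<in> (\<lambda>j. ec_nmul a b j P) ` {..<k}" by blast
      qed
    qed (auto simp: Orb_def)
    then have finO: "finite Orb" by simp
    define Orb' where "Orb' = Orb - {Inf}"
    have finO': "finite Orb'" unfolding Orb'_def using finO by simp
    have P1: "ec_nmul a b 1 P = P" by (simp add: P_def)
    have "P \<in> Orb" unfolding Orb_def using P1 by (metis rangeI)
    moreover have "P \<noteq> Inf" by (simp add: P_def)
    ultimately have PO': "P \<in> Orb'" unfolding Orb'_def by simp
    define f where "f = (\<lambda>Q. Hq (xc Q))"
    define G where "G = Max (f ` Orb')"
    have "G \<in> f ` Orb'" unfolding G_def using finO' PO' by (intro Max_in) auto
    then obtain Qs where Qs: "Qs \<in> Orb'" "f Qs = G" by blast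
    have Gmax: "f Q \<le> G" if "Q \<in> Orb'" for Q unfolding G_def using finO' that by simp
    obtain j where j: "Qs = ec_nmul a b j P" using Qs(1) unfolding Orb'_def Orb_def by blast
    obtain xs ys where Qxy: "Qs = Pt xs ys" using Qs(1) unfolding Orb'_def by (cases Qs) auto
    have cQ: "on_curve a b Qs" unfolding j using on_curve_nmul[OF cP] .
    have cs: "ys^2 = xs^3 + of_int a * xs + of_int b" using cQ unfolding Qxy on_curve_def by simp
    have inO: "ec_nmul a b i P \<in> Orb" for i unfolding Orb_def by blast
    have HA1: "Hq A \<ge> 1" by (rule Hq_ge1)
    have "Hq A \<le> max (KD a b) (8 * KS a b)"
    proof (cases "xs = A")
      case True
      then have GA: "G = Hq A" using Qs(2) unfolding f_def Qxy by simp
      have "ec_nmul a b 2 P = ec_add a b (Pt A B) (Pt A B)" by (simp add: P_def numeral_2_eq_2)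
      moreover have "ec_add a b (Pt A B) (Pt A B) \<noteq> Inf" using B0 by (simp add: Let_def)
      ultimately have "ec_add a b (Pt A B) (Pt A B) \<in> Orb'" unfolding Orb'_def using inO[of 2] by auto
      then have "Hq (xc (ec_add a b (Pt A B) (Pt A B))) \<le> Hq A" using Gmax GA unfolding f_def by fastforce
      moreover have "Hq A ^ 4 \<le> KD a b * Hq (xc (ec_add a b (Pt A B) (Pt A B)))"
        by (rule dup_bound[OF ell B0 cA])
      moreover have "KD a b * Hq (xc (ec_add a b (Pt A B) (Pt A B))) \<le> KD a b * Hq A"
        by (rule mult_left_mono) (use calculation KD_pos[of a b] in auto)
      ultimately have "Hq A ^ 4 \<le> KD a b * Hq A" by linarith
      then have "Hq A * Hq A^3 \<le> Hq A * KD a b" by (simp add: algebra_simps power_numeral_reduce)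
      then have "Hq A^3 \<le> KD a b" using HA1 by simp
      moreover have "Hq A \<le> Hq A^3" using power_increasing[of 1 3 "Hq A"] HA1 by simp
      ultimately show ?thesis by simp
    next
      case ne: False
      have ne': "A \<noteq> xs" using ne by simp
      obtain x3 y3 where s3: "ec_add a b (Pt A B) (Pt xs ys) = Pt x3 y3"
        using ne' by (simp add: Let_def)
      obtain x4 y4 where s4: "ec_add a b (Pt xs ys) (Pt A (-B)) = Pt x4 y4"
        using ne by (simp add: Let_def)
      have "ec_add a b P Qs \<in> Orb" unfolding j using inO[of "Suc j"] by simp
      then have "Pt x3 y3 \<in> Orb'" unfolding Orb'_def using s3 Qxy P_def by simp
      then have b3: "Hq x3 \<le> G" using Gmax unfolding f_def by fastforce
      have "j \<noteq> 0"
      proof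
        assume "j = 0"
        then have "Qs = Inf" using j by simp
        then show False using Qxy by simp
      qed
      then obtain i where i: "j = Suc i" by (cases j) auto
      have sumPR: "ec_add a b (Pt A B) (ec_nmul a b i P) = Pt xs ys" using j i Qxy P_def by simp
      have "ec_add a b (Pt xs ys) (Pt A (-B)) = ec_nmul a b i P"
        by (rule cancel[OF cP[unfolded P_def] on_curve_nmul[OF cP] sumPR ne])
      then have "Pt x4 y4 \<in> Orb'" using s4 inO[of i] unfolding Orb'_def by auto
      then have b4: "Hq x4 \<le> G" using Gmax unfolding f_def by fastforce
      have sd: "Hq xs^2 * Hq A^2 \<le> 8 * KS a b * Hq x3 * Hq x4"
        using sd_bound[OF ell cs cA ne] s3 s4 by simp
      have Gs: "G = Hq xs" using Qs(2) unfolding f_def Qxy by simp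
      have G1: "G \<ge> 1" unfolding Gs by (rule Hq_ge1)
      have "Hq x3 * Hq x4 \<le> G * G"
        by (rule mult_mono) (use Hq_ge1[of x3] Hq_ge1[of x4] b3 b4 in auto)
      then have "(8 * KS a b) * (Hq x3 * Hq x4) \<le> (8 * KS a b) * (G * G)"
        by (rule mult_left_mono) (use KS_pos[of a b] in auto)
      then have "8 * KS a b * Hq x3 * Hq x4 \<le> 8 * KS a b * G * G" by (simp add: mult.assoc)
      then have "G^2 * Hq A^2 \<le> G^2 * (8 * KS a b)" using sd unfolding Gs[symmetric]
        by (simp add: algebra_simps power2_eq_square)
      moreover have "G^2 > 0" using G1 by simp
      ultimately have "Hq A^2 \<le> 8 * KS a b" using mult_le_cancel_left_pos by blast
      moreover have "Hq A \<le> Hq A^2" using HA1 by (simp add: power2_eq_square)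
      ultimately show ?thesis by simp
    qed
    then have "real_of_int (Hq A) \<le> real_of_int (max (KD a b) (8 * KS a b))" by (simp only: of_int_le_iff)
    moreover have "real_of_rat A \<le> real_of_int (Hq A)" using Hq_abs[of A] abs_ge_self[of "real_of_rat A"] by linarith
    ultimately have "real_of_rat A \<le> real_of_int (max (KD a b) (8 * KS a b))" by linarith
    then show ?thesis by (rule order_trans[OF _ max.cobounded2])
  qed
qed

lemma lin_aux1: fixes X Y Z W :: real
  shows "\<bar>X - Y\<bar> \<le> Z \<Longrightarrow> 2 * Z \<le> W \<Longrightarrow> W \<le> 2 * (W + X - Y)"
  by (simp add: abs_le_iff)
lemma lin_aux2: fixes X Y Z W :: real
  shows "\<bar>X - Y\<bar> \<le> Z \<Longrightarrow> 2 * Z \<le> W \<Longrightarrow> 0 \<le> W \<Longrightarrow> W + X - Y \<le> 2 * W"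
  by (simp add: abs_le_iff)

lemma lin_aux3: fixes A B r :: real
  shows "2 + 2 * (A + B) \<le> r \<Longrightarrow> 0 \<le> A \<Longrightarrow> 0 \<le> B \<Longrightarrow> A \<le> r"
  by (smt (verit))

lemma g_bounds:
  fixes a b u v :: int and n :: nat
  assumes nC: "real n \<ge> 2 + 2 * (\<bar>a\<bar> + \<bar>b\<bar>)" and v1: "v \<ge> 1" and uv: "u \<ge> int n * v + 1"
  shows "2 * real_of_int (u^3 + a*u*v^2 - b*v^3) \<ge> real_of_int u ^ 3"
    and "real_of_int (u^3 + a*u*v^2 - b*v^3) \<le> 2 * real_of_int u ^ 3"
proof -
  define U where "U = real_of_int u"
  define V where "V = real_of_int v"
  define C where "C = real_of_int (\<bar>a\<bar> + \<bar>b\<bar>)"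
  have C0: "C \<ge> 0" unfolding C_def by simp
  have V1: "V \<ge> 1" unfolding V_def using v1 by simp
  have "real_of_int u \<ge> real_of_int (int n * v + 1)" using uv by (simp only: of_int_le_iff)
  then have UnV: "U \<ge> real n * V + 1" unfolding U_def V_def by simp
  have n2: "real n \<ge> 2" using nC C0 unfolding C_def by simp
  have nV: "real n * V \<ge> V" using n2 V1 by simp
  have UV: "U \<ge> V" using UnV nV by linarith
  have U1: "U \<ge> 1" using UV V1 by linarith
  have ea: "\<bar>real_of_int a * U * V^2\<bar> \<le> \<bar>real_of_int a\<bar> * U * V^2"
    using U1 V1 by (simp add: abs_mult)
  have "\<bar>real_of_int b * V^3\<bar> = \<bar>real_of_int b\<bar> * (V * V^2)" using V1 by (simp add: abs_mult power3_eq_cube power2_eq_square)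
  also have "\<dots> \<le> \<bar>real_of_int b\<bar> * (U * V^2)" using UV V1 by (intro mult_left_mono mult_right_mono) auto
  finally have eb: "\<bar>real_of_int b * V^3\<bar> \<le> \<bar>real_of_int b\<bar> * (U * V^2)" .
  have "2 * C * V^2 \<le> real n * V^2" using nC C0 V1 unfolding C_def by (intro mult_right_mono) auto
  also have "\<dots> \<le> (real n * V)^2" using n2 V1 by (simp add: power2_eq_square mult_le_cancel_right1 algebra_simps)
  also have "\<dots> \<le> U^2" using UnV nV V1 by (intro power_mono) auto
  finally have cU: "2 * C * V^2 \<le> U^2" .
  have cU3: "2 * (C * U * V^2) \<le> U^3"
  proof -
    have "U * (2 * C * V^2) \<le> U * U^2" using cU U1 by (intro mult_left_mono) auto
    then show ?thesis by (simp add: algebra_simps power2_eq_square power3_eq_cube)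
  qed
  have G: "real_of_int (u^3 + a*u*v^2 - b*v^3) = U^3 + real_of_int a * U * V^2 - real_of_int b * V^3"
    unfolding U_def V_def by simp
  have sum: "\<bar>real_of_int a * U * V^2 - real_of_int b * V^3\<bar> \<le> C * U * V^2"
  proof -
    have "\<bar>real_of_int a * U * V^2 - real_of_int b * V^3\<bar> \<le> \<bar>real_of_int a * U * V^2\<bar> + \<bar>real_of_int b * V^3\<bar>"
      by (rule abs_triangle_ineq4)
    also have "\<dots> \<le> \<bar>real_of_int a\<bar> * U * V^2 + \<bar>real_of_int b\<bar> * (U * V^2)" using ea eb by linarith
    also have "\<dots> = C * U * V^2" unfolding C_def by (simp add: algebra_simps)
    finally show ?thesis .
  qed
  show "2 * real_of_int (u^3 + a*u*v^2 - b*v^3) \<ge> real_of_int u ^ 3"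
    unfolding G U_def[symmetric] using lin_aux1[OF sum cU3] by simp
  have "U^3 \<ge> 0" using U1 by simp
  then show "real_of_int (u^3 + a*u*v^2 - b*v^3) \<le> 2 * real_of_int u ^ 3"
    unfolding G U_def[symmetric] using lin_aux2[OF sum cU3] by simp
qed

lemma pair_good:
  fixes a b :: int and n :: nat and u v :: int and \<epsilon> M0 :: real and Ps
  assumes eps: "0 < \<epsilon>" "\<epsilon> < 1/2"
    and tors: "\<forall>A B. torsion a b (Pt A B) \<longrightarrow> real_of_rat A \<le> M0"
    and nC: "real n \<ge> 2 + 2 * (\<bar>a\<bar> + \<bar>b\<bar>)"
    and nM: "real n > M0"
    and nK: "real n > (2 * exp (2 * (1 + \<epsilon>/(1-\<epsilon>)) * (deltaE a b + dP a b Ps)) + 1) powr (1 / (4 - 2 * (1 + \<epsilon>/(1-\<epsilon>))))"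
    and v2: "v \<ge> 2" and uv: "u \<ge> int n * v + 1"
    and big: "real_of_int v \<ge> 2 * real_of_int u powr (1 - \<epsilon>)"
  shows "map_suitable a b u v \<and> kernel_suitable a b u v \<and> bound_suitable a b Ps \<epsilon> u v"
proof -
  define \<alpha> where "\<alpha> = 1 + \<epsilon>/(1-\<epsilon>)"
  define K where "K = exp (2 * (1 + \<epsilon>/(1-\<epsilon>)) * (deltaE a b + dP a b Ps))"
  have K0: "K > 0" unfolding K_def by simp
  have al1: "(1 - \<epsilon>) * \<alpha> = 1" unfolding \<alpha>_def using eps by (simp add: field_simps)
  have alg1: "\<alpha> > 1" unfolding \<alpha>_def using eps by simp
  have all2: "\<alpha> < 2" unfolding \<alpha>_def using eps by (simp add: field_simps)
  define g where "g = u^3 + a*u*v^2 - b*v^3"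
  define U where "U = real_of_int u"
  define V where "V = real_of_int v"
  define G where "G = real_of_int g"
  have v1: "v \<ge> 1" using v2 by simp
  have G1: "2 * G \<ge> U^3" and G2: "G \<le> 2 * U^3"
    using g_bounds[OF nC v1 uv] unfolding G_def g_def U_def by auto
  have "real_of_int u \<ge> real_of_int (int n * v + 1)" using uv by (simp only: of_int_le_iff)
  then have UnV: "U \<ge> real n * V + 1" unfolding U_def V_def by simp
  have V2: "V \<ge> 2" unfolding V_def using v2 by simp
  have n2: "real n \<ge> 2" using nC by simp
  have nV: "real n * V \<ge> 2 * V" using n2 V2 by (intro mult_right_mono) auto
  have UV: "U \<ge> V" using UnV nV V2 by linarith
  have Un: "U \<ge> real n"
  proof -
    have "real n * 1 \<le> real n * V" using V2 by (intro mult_left_mono) auto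
    then show ?thesis using UnV by simp
  qed
  have U1: "U \<ge> 1" using UV V2 by linarith
  have Gpos: "G > 0" using G1 U1 by (smt (verit) one_le_power)
  have dE: "real_of_int (dE a b u v) = V * G" unfolding dE_def V_def G_def g_def by (simp add: algebra_simps)
  have u0: "u > 0" using U1 unfolding U_def by simp
  have v0: "v > 0" using v2 by simp
  have "U^2 \<ge> (real n * V)^2" using UnV nV V2 by (intro power_mono) auto
  then have U2: "U^2 \<ge> (real n)^2 * V^2" by (simp add: power_mult_distrib)
  have nn: "(real n)^2 \<ge> real n" using n2 by (simp add: power2_eq_square)
  have n4: "(real n)^2 \<ge> 4"
  proof -
    have "real n * real n \<ge> 2 * 2" using n2 by (intro mult_mono) auto
    then show ?thesis by (simp add: power2_eq_square)
  qed
  have "real_of_int (3*u^2 + a*v^2) > 0"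
  proof -
    have nC': "real n \<ge> 2 + 2 * (\<bar>real_of_int a\<bar> + \<bar>real_of_int b\<bar>)" using nC by simp
    have "\<bar>real_of_int a\<bar> \<le> real n" by (rule lin_aux3[OF nC' abs_ge_zero abs_ge_zero])
    then have "\<bar>real_of_int a\<bar> \<le> (real n)^2" using nn by (rule order_trans)
    then have "\<bar>real_of_int a\<bar> * V^2 \<le> (real n)^2 * V^2" by (intro mult_right_mono) auto
    then have "\<bar>real_of_int a\<bar> * V^2 \<le> U^2" using U2 by linarith
    moreover have "- (real_of_int a * V^2) \<le> \<bar>real_of_int a\<bar> * V^2"
      using abs_ge_minus_self[of "real_of_int a * V^2"] by (simp add: abs_mult)
    moreover have "U^2 > 0" using U1 by simp
    ultimately have pos: "3 * U^2 + real_of_int a * V^2 > 0" by linarith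
    have eq: "real_of_int (3*u^2 + a*v^2) = 3 * U^2 + real_of_int a * V^2" unfolding U_def V_def by simp
    show ?thesis unfolding eq by (rule pos)
  qed
  then have m3: "3*u^2 + a*v^2 > 0" by (simp only: of_int_0_less_iff)
  have "real_of_int (DE a b u v) > 0" unfolding DE_def using dE Gpos V2 by simp
  then have m4: "DE a b u v > 0" by (simp only: of_int_0_less_iff)
  have MS: "map_suitable a b u v" unfolding map_suitable_def using u0 v0 m3 m4 by simp
  have GU: "G - U \<ge> U * V"
  proof -
    have "4 * V^2 \<le> (real n)^2 * V^2" using n4 by (intro mult_right_mono) auto
    moreover have "2 * V + 2 \<le> 4 * V^2" using V2 by (simp add: power2_eq_square) (smt (verit) mult_le_cancel_right1)
    ultimately have "2 * V + 2 \<le> U^2" using U2 by linarith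
    then have "U * (2 * V + 2) \<le> U * U^2" using U1 by (intro mult_left_mono) auto
    then show ?thesis using G1 by (simp add: algebra_simps power2_eq_square power3_eq_cube)
  qed
  have val: "real_of_int (dE a b u v - u * v) / real_of_int (v^2) > M0"
  proof -
    have "real_of_int (dE a b u v - u * v) / real_of_int (v^2) = (G - U) / V"
      using dE V2 unfolding U_def V_def by (simp add: power2_eq_square field_simps)
    also have "\<dots> \<ge> U" using GU V2 by (simp add: field_simps)
    finally show ?thesis using Un nM by linarith
  qed
  have KS: "kernel_suitable a b u v" unfolding kernel_suitable_def
  proof (intro conjI allI impI)
    show "v > 1" using v2 by simp
    fix A B assume "torsion a b (Pt A B)"
    then have "real_of_rat A \<le> M0" using tors by blast
    then show "real_of_int (dE a b u v - u * v) / real_of_int (v^2) > real_of_rat A" using val by linarith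
  qed
  define \<gamma> where "\<gamma> = 4 - 2 * \<alpha>"
  have g0: "\<gamma> > 0" unfolding \<gamma>_def using all2 by simp
  have U0: "U > 0" using U1 by simp
  have V0: "V > 0" using V2 by simp
  have low: "(1/4 * (U * V + V^2)) powr \<alpha> * K < V * G"
  proof -
    have "1/4 * (U * V + V^2) \<le> U * V"
    proof -
      have "V^2 \<le> U * V" using UV V0 by (simp add: power2_eq_square mult_right_mono)
      moreover have "U * V > 0" using U0 V0 by simp
      ultimately show ?thesis by simp
    qed
    then have "(1/4 * (U * V + V^2)) powr \<alpha> \<le> (U * V) powr \<alpha>"
      using U0 V0 alg1 by (intro powr_mono2) auto
    also have "\<dots> = U powr \<alpha> * V powr \<alpha>" using U0 V0 by (simp add: powr_mult)
    also have "V powr \<alpha> = V powr (\<alpha> - 1) * V"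
    proof -
      have "V powr (\<alpha> - 1) * V = V powr (\<alpha> - 1) * V powr 1" using V0 by simp
      also have "\<dots> = V powr (\<alpha> - 1 + 1)" by (simp only: powr_add)
      finally show ?thesis by simp
    qed
    also have "U powr \<alpha> * (V powr (\<alpha> - 1) * V) \<le> U powr \<alpha> * (U powr (\<alpha> - 1) * V)"
      using UV V0 alg1 by (intro mult_left_mono mult_right_mono powr_mono2) auto
    also have "U powr \<alpha> * (U powr (\<alpha> - 1) * V) = U powr (2 * \<alpha> - 1) * V"
    proof -
      have "U powr \<alpha> * U powr (\<alpha> - 1) = U powr (\<alpha> + (\<alpha> - 1))" by (simp only: powr_add)
      also have "\<alpha> + (\<alpha> - 1) = 2 * \<alpha> - 1" by simp
      finally show ?thesis by (simp add: mult.assoc)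
    qed
    finally have A1: "(1/4 * (U * V + V^2)) powr \<alpha> \<le> U powr (2 * \<alpha> - 1) * V" .
    have "U powr \<gamma> \<ge> real n powr \<gamma>" using Un g0 by (intro powr_mono2) auto
    moreover have "real n powr \<gamma> > ((2 * K + 1) powr (1 / \<gamma>)) powr \<gamma>"
      using nK g0 K0 unfolding K_def \<gamma>_def \<alpha>_def by (intro powr_less_mono2) auto
    moreover have "((2 * K + 1) powr (1 / \<gamma>)) powr \<gamma> = 2 * K + 1"
      using g0 K0 by (simp add: powr_powr)
    ultimately have Ug: "U powr \<gamma> > 2 * K" by linarith
    have U3: "U powr \<gamma> * U powr (2 * \<alpha> - 1) = U^3"
    proof -
      have "U powr \<gamma> * U powr (2 * \<alpha> - 1) = U powr (\<gamma> + (2 * \<alpha> - 1))" by (simp only: powr_add)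
      also have "\<gamma> + (2 * \<alpha> - 1) = 3" unfolding \<gamma>_def by simp
      finally have "U powr \<gamma> * U powr (2 * \<alpha> - 1) = U powr 3" .
      also have "\<dots> = U^3" using U0 by (simp add: powr_realpow)
      finally show ?thesis .
    qed
    have Upos: "U powr (2 * \<alpha> - 1) > 0" using U0 by simp
    have "(1/4 * (U * V + V^2)) powr \<alpha> * K \<le> U powr (2 * \<alpha> - 1) * V * K"
      using A1 K0 by (intro mult_right_mono) auto
    also have "\<dots> < (U powr \<gamma> / 2) * U powr (2 * \<alpha> - 1) * V"
    proof -
      have "K * (U powr (2 * \<alpha> - 1) * V) < (U powr \<gamma> / 2) * (U powr (2 * \<alpha> - 1) * V)"
        using Ug Upos V0 by (intro mult_strict_right_mono) auto
      then show ?thesis by (simp add: algebra_simps)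
    qed
    also have "\<dots> = V * (U^3 / 2)" using U3 by (simp add: algebra_simps)
    also have "\<dots> \<le> V * G" using G1 V0 by (intro mult_left_mono) auto
    finally show ?thesis .
  qed
  have up: "V * G < (V^2 * (U * V + V^2)) powr \<alpha>"
  proof -
    have "V * G \<le> V * (2 * U^3)" using G2 V0 by (intro mult_left_mono) auto
    also have "\<dots> < 4 * V * U^3" using V0 U0 by simp
    also have "4 * V * U^3 \<le> (V^2 * (U * V + V^2)) powr \<alpha>"
    proof -
      define w where "w = 3 * \<alpha> - 1"
      have w2: "w \<ge> 2" unfolding w_def using alg1 by simp
      have ew: "(1 - \<epsilon>) * w = 2 + \<epsilon>" unfolding w_def using al1 by (simp add: algebra_simps)
      have Ue: "U powr (1 - \<epsilon>) > 0" using U0 by simp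
      have "V powr w \<ge> (2 * U powr (1 - \<epsilon>)) powr w"
        using big w2 Ue unfolding V_def U_def by (intro powr_mono2) auto
      also have "(2 * U powr (1 - \<epsilon>)) powr w = 2 powr w * U powr (2 + \<epsilon>)"
        using U0 by (simp add: powr_mult powr_powr ew)
      finally have Vw: "V powr w \<ge> 2 powr w * U powr (2 + \<epsilon>)" .
      have "2 powr w \<ge> 2 powr 2" using w2 by (intro powr_mono) auto
      then have tw: "2 powr w \<ge> 4" by simp
      have "U powr (\<alpha> + (2 + \<epsilon>)) \<ge> U powr 3" using U1 alg1 eps by (intro powr_mono) auto
      moreover have "U powr (\<alpha> + (2 + \<epsilon>)) = U powr \<alpha> * U powr (2 + \<epsilon>)" by (simp only: powr_add)
      moreover have "U powr 3 = U^3" using U0 by (simp add: powr_realpow)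
      ultimately have Ua: "U powr \<alpha> * U powr (2 + \<epsilon>) \<ge> U^3" by simp
      have "4 * V * U^3 \<le> 4 * V * (U powr \<alpha> * U powr (2 + \<epsilon>))" using Ua V0 by simp
      also have "\<dots> \<le> 2 powr w * V * (U powr \<alpha> * U powr (2 + \<epsilon>))"
        using tw V0 U0 by (intro mult_right_mono) auto
      also have "\<dots> = U powr \<alpha> * V * (2 powr w * U powr (2 + \<epsilon>))" by (simp add: algebra_simps)
      also have "\<dots> \<le> U powr \<alpha> * V * V powr w" using Vw U0 V0 by (intro mult_left_mono) auto
      also have "\<dots> = U powr \<alpha> * V powr (3 * \<alpha>)"
      proof -
        have "V * V powr w = V powr 1 * V powr w" using V0 by simp
        also have "\<dots> = V powr (1 + w)" by (simp only: powr_add)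
        also have "1 + w = 3 * \<alpha>" unfolding w_def by simp
        finally show ?thesis by (simp add: mult.assoc)
      qed
      also have "\<dots> = (U * V^3) powr \<alpha>"
      proof -
        have "(U * V^3) powr \<alpha> = U powr \<alpha> * (V^3) powr \<alpha>" using U0 V0 by (simp add: powr_mult)
        also have "(V^3) powr \<alpha> = (V powr 3) powr \<alpha>" using V0 by (simp add: powr_realpow)
        also have "\<dots> = V powr (3 * \<alpha>)" by (simp add: powr_powr)
        finally show ?thesis by simp
      qed
      also have "\<dots> \<le> (V^2 * (U * V + V^2)) powr \<alpha>"
      proof -
        have "U * V^3 \<le> V^2 * (U * V + V^2)" using V0 by (simp add: algebra_simps power2_eq_square power3_eq_cube)
        then show ?thesis using U0 V0 alg1 by (intro powr_mono2) auto
      qed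
      finally show ?thesis .
    qed
    finally show ?thesis .
  qed
  have BS: "bound_suitable a b Ps \<epsilon> u v"
    unfolding bound_suitable_def Let_def using u0 v0 low up dE
    unfolding U_def V_def \<alpha>_def K_def by (simp add: mult.commute)
  show ?thesis using MS KS BS by blast
qed



lemma nat_floor_le: "(Y::real) \<ge> 0 \<Longrightarrow> real (nat \<lfloor>Y\<rfloor>) \<le> Y"
proof -
  assume Y: "Y \<ge> 0"
  have "\<lfloor>Y\<rfloor> \<ge> 0" using Y by simp
  then have "real (nat \<lfloor>Y\<rfloor>) = real_of_int \<lfloor>Y\<rfloor>" by (simp only: of_nat_nat)
  also have "\<dots> \<le> Y" by (rule of_int_floor_le)
  finally show ?thesis .
qed

lemma count_box:
  fixes Y L :: real
  assumes "Y \<ge> 0" "L \<ge> 0"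
  shows "finite {(x::int, y::int). 0 < x \<and> real_of_int x < Y \<and> 0 < y \<and> real_of_int y \<le> L}"
    and "real (card {(x::int, y::int). 0 < x \<and> real_of_int x < Y \<and> 0 < y \<and> real_of_int y \<le> L}) \<le> Y * L"
proof -
  let ?S = "{(x::int, y::int). 0 < x \<and> real_of_int x < Y \<and> 0 < y \<and> real_of_int y \<le> L}"
  let ?B = "{1..\<lfloor>Y\<rfloor>} \<times> {1..\<lfloor>L\<rfloor>}"
  have sub: "?S \<subseteq> ?B"
  proof
    fix p assume "p \<in> ?S"
    then obtain x y where p: "p = (x, y)" "0 < x" "real_of_int x < Y" "0 < y" "real_of_int y \<le> L" by auto
    have "x \<le> \<lfloor>Y\<rfloor>" using p(3) le_floor_iff[of x Y] by linarith
    moreover have "y \<le> \<lfloor>L\<rfloor>" using p(5) le_floor_iff[of y L] by linarith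
    ultimately show "p \<in> ?B" using p by auto
  qed
  have finB: "finite ?B" by simp
  show "finite ?S" using finite_subset[OF sub finB] .
  have "card ?S \<le> card ?B" using card_mono[OF finB sub] .
  moreover have "card ?B = card {1..\<lfloor>Y\<rfloor>} * card {1..\<lfloor>L\<rfloor>}" by (rule card_cartesian_product)
  moreover have "card {1..\<lfloor>Y\<rfloor>} = nat \<lfloor>Y\<rfloor>" by simp
  moreover have "card {1..\<lfloor>L\<rfloor>} = nat \<lfloor>L\<rfloor>" by simp
  ultimately have "card ?S \<le> nat \<lfloor>Y\<rfloor> * nat \<lfloor>L\<rfloor>" by simp
  then have "real (card ?S) \<le> real (nat \<lfloor>Y\<rfloor> * nat \<lfloor>L\<rfloor>)" by (simp only: of_nat_le_iff)
  also have "\<dots> = real (nat \<lfloor>Y\<rfloor>) * real (nat \<lfloor>L\<rfloor>)" by (rule of_nat_mult)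
  also have "\<dots> \<le> Y * L" using nat_floor_le[OF assms(1)] nat_floor_le[OF assms(2)]
    by (intro mult_mono) auto
  finally show "real (card ?S) \<le> Y * L" .
qed

theorem lemma4p2:
  fixes a4 a6 :: int and Ps :: "ecpt list" and \<epsilon> :: real
  assumes "elliptic a4 a6"
    and "lin_indep a4 a6 Ps"
    and "0 < \<epsilon>" and "\<epsilon> < 1/2"
  shows "\<exists>N>0. \<forall>n::nat. real n > N \<longrightarrow>
           (\<lambda>Y. real (A_count a4 a6 Ps \<epsilon> n Y)) \<in> O[at_top](\<lambda>Y. Y powr (2 - \<epsilon>))"
proof -
  note eps = assms(3,4)
  obtain M0 where tors: "\<forall>A B. torsion a4 a6 (Pt A B) \<longrightarrow> real_of_rat A \<le> M0"
    using torsion_bound[OF assms(1)] by blast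
  define K where "K = exp (2 * (1 + \<epsilon>/(1-\<epsilon>)) * (deltaE a4 a6 + dP a4 a6 Ps))"
  define N where "N = max (real_of_int (2 + 2 * (\<bar>a4\<bar> + \<bar>a6\<bar>)))
      (max M0 ((2 * K + 1) powr (1 / (4 - 2 * (1 + \<epsilon>/(1-\<epsilon>))))))"
  have N1: "N \<ge> real_of_int (2 + 2 * (\<bar>a4\<bar> + \<bar>a6\<bar>))" unfolding N_def by (rule max.cobounded1)
  have N3: "N \<ge> M0" unfolding N_def by (rule order_trans[OF max.cobounded1 max.cobounded2])
  have N4: "N \<ge> (2 * K + 1) powr (1 / (4 - 2 * (1 + \<epsilon>/(1-\<epsilon>))))" unfolding N_def by (rule order_trans[OF max.cobounded2 max.cobounded2])
  have "real_of_int (2 + 2 * (\<bar>a4\<bar> + \<bar>a6\<bar>)) \<ge> 2" by simp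
  then have N2: "N \<ge> 2" using N1 by linarith
  show ?thesis
  proof (intro exI[of _ N] conjI allI impI)
    show "N > 0" using N2 by simp
    fix n :: nat
    assume nN: "real n > N"
    have nC: "real n \<ge> 2 + 2 * (\<bar>a4\<bar> + \<bar>a6\<bar>)" using nN N1 by linarith
    have nM: "real n > M0" using nN N3 by linarith
    have nK: "real n > (2 * exp (2 * (1 + \<epsilon>/(1-\<epsilon>)) * (deltaE a4 a6 + dP a4 a6 Ps)) + 1) powr (1 / (4 - 2 * (1 + \<epsilon>/(1-\<epsilon>))))"
      using nN N4 unfolding K_def by linarith
    define c where "c = 2 * (1 + real n)"
    have bound: "real (A_count a4 a6 Ps \<epsilon> n Y) \<le> c * Y powr (2 - \<epsilon>)" if Y1: "Y \<ge> 1" for Y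
    proof -
      define L where "L = c * Y powr (1 - \<epsilon>)"
      have YL: "Y powr (1 - \<epsilon>) \<ge> 1" using Y1 eps by (intro ge_one_powr_ge_zero) auto
      have L2: "L \<ge> 2" unfolding L_def c_def
      proof -
        have "2 * 1 \<le> 2 * (1 + real n)" by simp
        also have "\<dots> \<le> 2 * (1 + real n) * Y powr (1 - \<epsilon>)" using YL by simp
        finally show "2 \<le> 2 * (1 + real n) * Y powr (1 - \<epsilon>)" by simp
      qed
      let ?S = "{(x :: int, y :: int). 0 < x \<and> real_of_int x < Y \<and> 0 < y \<and> real_of_int y < Y \<and>
          \<not> (map_suitable a4 a6 (x + int n * y) y \<and> kernel_suitable a4 a6 (x + int n * y) y \<and>
             bound_suitable a4 a6 Ps \<epsilon> (x + int n * y) y)}"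
      let ?B = "{(x::int, y::int). 0 < x \<and> real_of_int x < Y \<and> 0 < y \<and> real_of_int y \<le> L}"
      have sub: "?S \<subseteq> ?B"
      proof
        fix p assume "p \<in> ?S"
        then obtain x y where p: "p = (x, y)" "0 < x" "real_of_int x < Y" "0 < y" "real_of_int y < Y"
          and bad: "\<not> (map_suitable a4 a6 (x + int n * y) y \<and> kernel_suitable a4 a6 (x + int n * y) y \<and>
             bound_suitable a4 a6 Ps \<epsilon> (x + int n * y) y)" by auto
        define u where "u = x + int n * y"
        have uv: "u \<ge> int n * y + 1" unfolding u_def using p(2) by simp
        have "real_of_int y \<le> L"
        proof (cases "y \<ge> 2")
          case False
          then have "y = 1" using p(4) by simp
          then show ?thesis using L2 by simp
        next
          case True
          show ?thesis
          proof (rule ccontr)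
            assume "\<not> real_of_int y \<le> L"
            then have yL: "real_of_int y > L" by simp
            have ru: "real_of_int u < (1 + real n) * Y"
            proof -
              have "real n * real_of_int y \<le> real n * Y" using p(5) by (intro mult_left_mono) auto
              then show ?thesis unfolding u_def using p(3) by (simp add: algebra_simps)
            qed
            have "int n * y \<ge> 0" using p(4) by simp
            then have "u > 0" using uv by linarith
            then have u0: "real_of_int u > 0" by simp
            have "real_of_int u powr (1 - \<epsilon>) \<le> ((1 + real n) * Y) powr (1 - \<epsilon>)"
              using ru u0 eps by (intro powr_mono2) auto
            also have "\<dots> = (1 + real n) powr (1 - \<epsilon>) * Y powr (1 - \<epsilon>)" using Y1 by (simp add: powr_mult)
            also have "\<dots> \<le> (1 + real n) * Y powr (1 - \<epsilon>)"
            proof -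
              have "(1 + real n) powr (1 - \<epsilon>) \<le> (1 + real n) powr 1" using eps by (intro powr_mono) auto
              then show ?thesis using Y1 by (intro mult_right_mono) auto
            qed
            finally have uY: "real_of_int u powr (1 - \<epsilon>) \<le> (1 + real n) * Y powr (1 - \<epsilon>)" .
            have "L = 2 * ((1 + real n) * Y powr (1 - \<epsilon>))" unfolding L_def c_def by (simp add: algebra_simps)
            then have "2 * real_of_int u powr (1 - \<epsilon>) \<le> L" using uY by linarith
            then have big: "real_of_int y \<ge> 2 * real_of_int u powr (1 - \<epsilon>)" using yL by simp
            have "map_suitable a4 a6 u y \<and> kernel_suitable a4 a6 u y \<and> bound_suitable a4 a6 Ps \<epsilon> u y"
              by (rule pair_good[OF eps tors nC nM nK True uv big])
            then show False using bad unfolding u_def by blast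
          qed
        qed
        then show "p \<in> ?B" using p by auto
      qed
      have L0: "L \<ge> 0" using L2 by simp
      have Y0: "Y \<ge> 0" using Y1 by simp
      have "card ?S \<le> card ?B" using card_mono[OF count_box(1)[OF Y0 L0] sub] .
      then have "real (card ?S) \<le> real (card ?B)" by simp
      also have "\<dots> \<le> Y * L" using count_box(2)[OF Y0 L0] .
      also have "\<dots> = c * (Y powr 1 * Y powr (1 - \<epsilon>))" unfolding L_def using Y1 by simp
      also have "\<dots> = c * Y powr (1 + (1 - \<epsilon>))" by (simp only: powr_add)
      also have "\<dots> = c * Y powr (2 - \<epsilon>)" by simp
      finally show ?thesis unfolding A_count_def .
    qed
    show "(\<lambda>Y. real (A_count a4 a6 Ps \<epsilon> n Y)) \<in> O[at_top](\<lambda>Y. Y powr (2 - \<epsilon>))"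
    proof (rule bigoI[where c = c])
      show "eventually (\<lambda>Y. norm (real (A_count a4 a6 Ps \<epsilon> n Y)) \<le> c * norm (Y powr (2 - \<epsilon>))) at_top"
        using eventually_ge_at_top[of "1::real"]
      proof eventually_elim
        case (elim Y)
        then show ?case using bound[OF elim] by simp
      qed
    qed
  qed
qed


end
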